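(* Let $\phi\in\Phi$, $f:\mathbb{R}^{n_1\times n_2}\to(-\infty,+\infty]$ proper lsc, $\Omega\subseteq\mathbb{R}^{n_1\times n_2}$ closed ($n_1\le n_2$), $\delta>0$, and suppose $\min_X\{\mathrm{rank}(X): f(X)\le\delta,\ X\in\Omega\}$ has a nonempty global optimal solution set. Consider $$\textstyle (Q)\ \min_{X,W\in\mathbb{R}^{n_1\times n_2}}\Big\{\sum_{i=1}^{n_1}\phi(\sigma_i(W)):\ \|X\|_*-\langle W,X\rangle=0,\ \|W\|\le1,\ X\in\Omega,\ f(X)\le\delta\Big\}.$$ If $X^*=U^*[\mathrm{Diag}(\sigma(X^* ))\ \ 0](V^* )^T$ (an SVD) is globally optimal for the rank minimization problem, then $(X^*,\,U_1^*(V_1^* )^T+t^*U_2^*[\mathrm{Diag}(e)\ \ 0](V_2^* )^T)$ is globally optimal for $(Q)$; conversely, if $(X^*,W^* )$ is globally optimal for $(Q)$, then $X^*$ is globally optimal for the rank minimization problem.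
   Context: $\Phi$ is the family of proper lsc functions $\phi:\mathbb{R}\to(-\infty,+\infty]$ with $\mathrm{int}(\mathrm{dom}\,\phi)\supseteq[0,1]$, convex on $[0,1]$, such that $\min_{t\in[0,1]}\phi(t)=0$ is attained at a (fixed) point $t^*\in[0,1)$, and $\phi(1)=1$. $\sigma(X)\in\mathbb{R}^{n_1}$ is the vector of singular values in nonincreasing order; $\|X\|_*$ nuclear norm, $\|X\|$ spectral norm, $\langle\cdot,\cdot\rangle$ trace inner product. For $X$ with SVD $U[\mathrm{Diag}(\sigma(X))\ 0]V^T$ and $r=\mathrm{rank}(X)$, $U_1,V_1$ are the first $r$ columns of $U,V$, and $U_2,V_2$ are the last $n_1-r$ and $n_2-r$ columns of $U,V$ respectively; $e$ is the all-ones vector of length $n_1-r$. *)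

theory Defs
  imports "HOL-Analysis.Analysis" "Jordan_Normal_Form.DL_Rank"
begin

text \<open>Matrices are Jordan_Normal_Form matrices of type real mat, restricted to
  carrier_mat n1 n2.  Rank is the library rank (dimension of the column space).\<close>

definition mrank :: "real mat \<Rightarrow> nat" where
  "mrank X = vec_space.rank (dim_row X) X"

definition orth_mat :: "nat \<Rightarrow> real mat \<Rightarrow> bool" where
  "orth_mat n U \<longleftrightarrow> U \<in> carrier_mat n n \<and> transpose_mat U * U = 1\<^sub>m n"

definition rect_diag :: "nat \<Rightarrow> nat \<Rightarrow> (nat \<Rightarrow> real) \<Rightarrow> real mat" where
  "rect_diag m n s = mat m n (\<lambda>(i,j). if i = j then s i else 0)"

definition is_svd :: "nat \<Rightarrow> nat \<Rightarrow> real mat \<Rightarrow> real mat \<Rightarrow> (nat \<Rightarrow> real) \<Rightarrow> real mat \<Rightarrow> bool" where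
  "is_svd m n X U s V \<longleftrightarrow> X \<in> carrier_mat m n \<and> orth_mat m U \<and> orth_mat n V \<and>
     (\<forall>i<m. 0 \<le> s i) \<and> (\<forall>i j. i \<le> j \<longrightarrow> j < m \<longrightarrow> s j \<le> s i) \<and>
     (\<forall>i. m \<le> i \<longrightarrow> s i = 0) \<and>
     X = U * rect_diag m n s * transpose_mat V"

text \<open>singular values sigma(X) (indices 0..m-1, value 0 outside), uniquely determined by any SVD\<close>
definition sing_vals :: "real mat \<Rightarrow> nat \<Rightarrow> real" where
  "sing_vals X = (THE s. \<exists>U V. is_svd (dim_row X) (dim_col X) X U s V)"

definition nuc_norm :: "real mat \<Rightarrow> real" where
  "nuc_norm X = (\<Sum>i<dim_row X. sing_vals X i)"

definition spec_norm :: "real mat \<Rightarrow> real" where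
  "spec_norm X = (if dim_row X = 0 then 0 else sing_vals X 0)"

definition mat_inner :: "real mat \<Rightarrow> real mat \<Rightarrow> real" where
  "mat_inner W X = (\<Sum>i<dim_row X. \<Sum>j<dim_col X. W $$ (i,j) * X $$ (i,j))"

definition col_block :: "real mat \<Rightarrow> nat \<Rightarrow> nat \<Rightarrow> real mat" where
  "col_block A a b = mat (dim_row A) (b - a) (\<lambda>(i,j). A $$ (i, a + j))"

text \<open>Topology on R^{m x n}: entrywise convergence (the Euclidean topology).\<close>
definition mat_tendsto :: "nat \<Rightarrow> nat \<Rightarrow> (nat \<Rightarrow> real mat) \<Rightarrow> real mat \<Rightarrow> bool" where
  "mat_tendsto m n Xs X \<longleftrightarrow> (\<forall>i<m. \<forall>j<n. (\<lambda>k. Xs k $$ (i,j)) \<longlonglongrightarrow> X $$ (i,j))"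

definition mat_closed :: "nat \<Rightarrow> nat \<Rightarrow> real mat set \<Rightarrow> bool" where
  "mat_closed m n \<Omega> \<longleftrightarrow> \<Omega> \<subseteq> carrier_mat m n \<and>
     (\<forall>Xs X. (\<forall>k. Xs k \<in> \<Omega>) \<longrightarrow> X \<in> carrier_mat m n \<longrightarrow> mat_tendsto m n Xs X \<longrightarrow> X \<in> \<Omega>)"

definition mat_proper_lsc :: "nat \<Rightarrow> nat \<Rightarrow> (real mat \<Rightarrow> ereal) \<Rightarrow> bool" where
  "mat_proper_lsc m n f \<longleftrightarrow>
     (\<forall>X\<in>carrier_mat m n. f X \<noteq> -\<infinity>) \<and> (\<exists>X\<in>carrier_mat m n. f X \<noteq> \<infinity>) \<and>
     (\<forall>Xs X. (\<forall>k. Xs k \<in> carrier_mat m n) \<longrightarrow> X \<in> carrier_mat m n \<longrightarrow>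
        mat_tendsto m n Xs X \<longrightarrow> f X \<le> liminf (\<lambda>k. f (Xs k)))"

text \<open>The class Phi, with the fixed minimizer t*\<close>
definition Phi_class :: "(real \<Rightarrow> ereal) \<Rightarrow> real \<Rightarrow> bool" where
  "Phi_class \<phi> ts \<longleftrightarrow>
     (\<forall>t. \<phi> t \<noteq> -\<infinity>) \<and> (\<exists>t. \<phi> t \<noteq> \<infinity>) \<and>
     (\<forall>t xs. xs \<longlonglongrightarrow> t \<longrightarrow> \<phi> t \<le> liminf (\<lambda>k. \<phi> (xs k))) \<and>
     {0..1} \<subseteq> interior {t. \<phi> t \<noteq> \<infinity>} \<and>
     convex_on {0..1} (\<lambda>t. real_of_ereal (\<phi> t)) \<and>
     ts \<in> {0..<1} \<and> \<phi> ts = 0 \<and> (\<forall>t\<in>{0..1}. 0 \<le> \<phi> t) \<and>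
     \<phi> 1 = 1"

end

theory Submission
  imports Defs "Jordan_Normal_Form.Spectral_Radius" "HOL-Combinatorics.Permutations"
begin

lemma sum_sq_eq_0_iff:
  fixes x :: "nat \<Rightarrow> real"
  shows "(\<Sum>a<n. (x a)^2) = 0 \<longleftrightarrow> (\<forall>a<n. x a = 0)"
  by (subst sum_nonneg_eq_0_iff) auto

lemma kernel_exists:
  fixes A :: "real mat"
  assumes A: "A \<in> carrier_mat n k" and kn: "k < n"
  shows "\<exists>x. (\<forall>j<k. (\<Sum>a<n. A$$(a,j) * x a) = 0) \<and> (\<Sum>a<n. (x a)^2) = 1"
proof -
  define B where "B = mat n n (\<lambda>(i,a). if i < k then A$$(a,i) else (0::real))"
  have Bc: "B \<in> carrier_mat n n" unfolding B_def by auto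
  have "transpose_mat B *\<^sub>v unit_vec n k = 0\<^sub>v n"
    by (rule eq_vecI, auto simp: B_def scalar_prod_def unit_vec_def kn)
  moreover have "unit_vec n k \<noteq> (0\<^sub>v n :: real vec)"
    using kn by (metis index_unit_vec(1) index_zero_vec(1) order.refl zero_neq_one)
  ultimately have "det (transpose_mat B) = 0"
    using det_0_iff_vec_prod_zero_field[of "transpose_mat B" n] Bc unit_vec_carrier[of n k]
    by (metis transpose_carrier_mat)
  hence "det B = 0" using Bc by (simp add: det_transpose)
  then obtain v where v: "v \<in> carrier_vec n" "v \<noteq> 0\<^sub>v n" "B *\<^sub>v v = 0\<^sub>v n"
    using det_0_iff_vec_prod_zero_field[OF Bc] by auto
  define N where "N = (\<Sum>a<n. (v$a)^2)"
  have "N \<noteq> 0"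
  proof
    assume "N = 0"
    hence "\<forall>a<n. v$a = 0" unfolding N_def by (simp add: sum_sq_eq_0_iff)
    hence "v = 0\<^sub>v n" using v(1) by (intro eq_vecI) auto
    thus False using v(2) by simp
  qed
  moreover have "N \<ge> 0" unfolding N_def by (intro sum_nonneg) auto
  ultimately have Npos: "N > 0" by simp
  define x where "x = (\<lambda>a. v$a / sqrt N)"
  have "(\<Sum>a<n. (x a)^2) = (\<Sum>a<n. (v$a)^2 / N)"
    unfolding x_def using Npos by (simp add: power_divide)
  also have "\<dots> = 1" using Npos unfolding N_def[symmetric] by (simp add: sum_divide_distrib[symmetric] N_def)
  finally have x1: "(\<Sum>a<n. (x a)^2) = 1" .
  have "\<forall>j<k. (\<Sum>a<n. A$$(a,j) * x a) = 0"
  proof (intro allI impI)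
    fix j assume j: "j < k"
    have "(B *\<^sub>v v) $ j = 0" using v(3) j kn by simp
    hence "(\<Sum>a<n. A$$(a,j) * v$a) = 0" using j kn v(1)
      by (simp add: B_def scalar_prod_def atLeast0LessThan)
    hence "(\<Sum>a<n. A$$(a,j) * v$a) / sqrt N = 0" by simp
    thus "(\<Sum>a<n. A$$(a,j) * x a) = 0" unfolding x_def
      by (simp add: sum_divide_distrib)
  qed
  with x1 show ?thesis by blast
qed

definition orthonormal_cols :: "nat \<Rightarrow> nat \<Rightarrow> real mat \<Rightarrow> bool" where
  "orthonormal_cols n k A \<longleftrightarrow> A \<in> carrier_mat n k \<and>
     (\<forall>i<k. \<forall>j<k. (\<Sum>a<n. A$$(a,i)*A$$(a,j)) = (if i = j then 1 else 0))"

lemma orth_mat_iff_cols: "orth_mat n U \<longleftrightarrow> orthonormal_cols n n U"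
proof
  assume o: "orth_mat n U"
  hence U: "U \<in> carrier_mat n n" and e: "transpose_mat U * U = 1\<^sub>m n" unfolding orth_mat_def by auto
  show "orthonormal_cols n n U" unfolding orthonormal_cols_def
  proof (intro conjI allI impI U)
    fix i j assume i: "i < n" and j: "j < n"
    have "(transpose_mat U * U) $$ (i,j) = (1\<^sub>m n) $$ (i,j)" using e by simp
    thus "(\<Sum>a<n. U$$(a,i)*U$$(a,j)) = (if i = j then 1 else 0)"
      using U i j by (simp add: scalar_prod_def atLeast0LessThan)
  qed
next
  assume o: "orthonormal_cols n n U"
  hence U: "U \<in> carrier_mat n n" unfolding orthonormal_cols_def by auto
  have "transpose_mat U * U = 1\<^sub>m n"
    by (rule eq_matI, insert o U, auto simp: orthonormal_cols_def scalar_prod_def atLeast0LessThan)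
  thus "orth_mat n U" using U unfolding orth_mat_def by auto
qed

lemma orth_complete_aux:
  "\<forall>k A. n - k = d \<longrightarrow> k \<le> n \<longrightarrow> orthonormal_cols n k A \<longrightarrow>
     (\<exists>U. orth_mat n U \<and> (\<forall>a<n. \<forall>j<k. U$$(a,j) = A$$(a,j)))"
proof (induction d)
  case 0
  show ?case
  proof (intro allI impI)
    fix k A assume "n - k = 0" "k \<le> n" "orthonormal_cols n k A"
    hence "k = n" "orthonormal_cols n n A" by auto
    thus "\<exists>U. orth_mat n U \<and> (\<forall>a<n. \<forall>j<k. U$$(a,j) = A$$(a,j))"
      unfolding orth_mat_iff_cols by blast
  qed
next
  case (Suc d)
  show ?case
  proof (intro allI impI)
    fix k A assume d: "n - k = Suc d" and kn: "k \<le> n" and o: "orthonormal_cols n k A"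
    hence kn': "k < n" by auto
    have A: "A \<in> carrier_mat n k" using o unfolding orthonormal_cols_def by auto
    obtain x where x: "\<forall>j<k. (\<Sum>a<n. A$$(a,j) * x a) = 0" "(\<Sum>a<n. (x a)^2) = 1"
      using kernel_exists[OF A kn'] by blast
    define A' where "A' = mat n (Suc k) (\<lambda>(a,j). if j < k then A$$(a,j) else x a)"
    have o': "orthonormal_cols n (Suc k) A'"
      unfolding orthonormal_cols_def
    proof (intro conjI allI impI)
      show "A' \<in> carrier_mat n (Suc k)" unfolding A'_def by auto
      fix i j assume i: "i < Suc k" and j: "j < Suc k"
      have e1: "(\<Sum>a<n. A'$$(a,i)*A'$$(a,j)) =
         (\<Sum>a<n. (if i < k then A$$(a,i) else x a) * (if j < k then A$$(a,j) else x a))"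
        by (rule sum.cong, insert i j, auto simp: A'_def)
      show "(\<Sum>a<n. A'$$(a,i)*A'$$(a,j)) = (if i = j then 1 else 0)"
        unfolding e1
      proof (cases "i < k"; cases "j < k")
        assume "i < k" "j < k" thus "(\<Sum>a<n. (if i < k then A$$(a,i) else x a) * (if j < k then A$$(a,j) else x a)) = (if i = j then 1 else 0)"
          using o unfolding orthonormal_cols_def by auto
      next
        assume "i < k" "\<not> j < k" thus "(\<Sum>a<n. (if i < k then A$$(a,i) else x a) * (if j < k then A$$(a,j) else x a)) = (if i = j then 1 else 0)"
          using x(1) by auto
      next
        assume "\<not> i < k" "j < k" thus "(\<Sum>a<n. (if i < k then A$$(a,i) else x a) * (if j < k then A$$(a,j) else x a)) = (if i = j then 1 else 0)"
          using x(1) by (auto simp: mult.commute)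
      next
        assume "\<not> i < k" "\<not> j < k" hence "i = k" "j = k" using i j by auto
        thus "(\<Sum>a<n. (if i < k then A$$(a,i) else x a) * (if j < k then A$$(a,j) else x a)) = (if i = j then 1 else 0)"
          using x(2) by (simp add: power2_eq_square)
      qed
    qed
    have "n - Suc k = d" "Suc k \<le> n" using d kn' by auto
    with Suc.IH o' obtain U where U: "orth_mat n U" "\<forall>a<n. \<forall>j<Suc k. U$$(a,j) = A'$$(a,j)" by blast
    have "\<forall>a<n. \<forall>j<k. U$$(a,j) = A$$(a,j)" using U(2) by (auto simp: A'_def)
    with U(1) show "\<exists>U. orth_mat n U \<and> (\<forall>a<n. \<forall>j<k. U$$(a,j) = A$$(a,j))" by blast
  qed
qed

lemma orth_complete:
  assumes "orthonormal_cols n k A" "k \<le> n"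
  shows "\<exists>U. orth_mat n U \<and> (\<forall>a<n. \<forall>j<k. U$$(a,j) = A$$(a,j))"
  using orth_complete_aux assms by blast

lemma orth_mat_rows:
  assumes "orth_mat n U" "i < n" "j < n"
  shows "(\<Sum>a<n. U$$(i,a)*U$$(j,a)) = (if i = j then 1 else 0)"
proof -
  have U: "U \<in> carrier_mat n n" and e: "transpose_mat U * U = 1\<^sub>m n" using assms unfolding orth_mat_def by auto
  have "U * transpose_mat U = 1\<^sub>m n"
    by (rule mat_mult_left_right_inverse[OF _ U e], insert U, auto)
  hence "(U * transpose_mat U) $$ (i,j) = (1\<^sub>m n) $$ (i,j)" by simp
  thus ?thesis using U assms by (simp add: scalar_prod_def atLeast0LessThan)
qed

lemma orth_mat_cols:
  assumes "orth_mat n U" "i < n" "j < n"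
  shows "(\<Sum>a<n. U$$(a,i)*U$$(a,j)) = (if i = j then 1 else 0)"
  using assms unfolding orth_mat_iff_cols orthonormal_cols_def by auto

definition symm :: "nat \<Rightarrow> real mat \<Rightarrow> bool" where
  "symm n S \<longleftrightarrow> S \<in> carrier_mat n n \<and> (\<forall>i<n. \<forall>j<n. S$$(i,j) = S$$(j,i))"

lemma real_eigvec:
  assumes S: "symm n S" and n: "n > 0"
  shows "\<exists>lam x. (\<forall>i<n. (\<Sum>j<n. S$$(i,j) * x j) = lam * x i) \<and> (\<Sum>a<n. (x a)^2) = 1"
proof -
  have Sc: "S \<in> carrier_mat n n" and sy: "\<And>i j. i<n \<Longrightarrow> j<n \<Longrightarrow> S$$(i,j) = S$$(j,i)"
    using S unfolding symm_def by auto
  define C where "C = map_mat complex_of_real S"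
  have C: "C \<in> carrier_mat n n" using Sc unfolding C_def by auto
  obtain e where "e \<in> spectrum C" using spectrum_non_empty[OF C n] by blast
  then obtain v where ev: "eigenvector C v e" unfolding spectrum_def eigenvalue_def by auto
  have v: "v \<in> carrier_vec n" "v \<noteq> 0\<^sub>v n" and Cv: "C *\<^sub>v v = e \<cdot>\<^sub>v v"
    using ev C unfolding eigenvector_def by auto
  have eq: "\<And>i. i < n \<Longrightarrow> (\<Sum>j<n. complex_of_real (S$$(i,j)) * v$j) = e * v$i"
  proof -
    fix i assume i: "i < n"
    have "(C *\<^sub>v v) $ i = (e \<cdot>\<^sub>v v) $ i" using Cv by simp
    thus "(\<Sum>j<n. complex_of_real (S$$(i,j)) * v$j) = e * v$i"
      using i v C Sc by (simp add: C_def scalar_prod_def atLeast0LessThan)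
  qed
  define Q where "Q = (\<Sum>i<n. cnj (v$i) * (\<Sum>j<n. complex_of_real (S$$(i,j)) * v$j))"
  define N where "N = (\<Sum>i<n. cnj (v$i) * v$i)"
  have "Q = (\<Sum>i<n. cnj (v$i) * (e * v$i))" unfolding Q_def
    by (rule sum.cong[OF refl], simp add: eq)
  hence QN: "Q = e * N" unfolding N_def by (simp add: sum_distrib_left mult_ac)
  have "cnj Q = (\<Sum>i<n. v$i * (\<Sum>j<n. complex_of_real (S$$(i,j)) * cnj (v$j)))"
    unfolding Q_def by (simp add: sum_distrib_left)
  also have "\<dots> = (\<Sum>i<n. \<Sum>j<n. complex_of_real (S$$(i,j)) * v$i * cnj (v$j))"
    by (simp add: sum_distrib_left mult_ac)
  also have "\<dots> = (\<Sum>j<n. \<Sum>i<n. complex_of_real (S$$(i,j)) * v$i * cnj (v$j))"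
    by (rule sum.swap)
  also have "\<dots> = (\<Sum>j<n. \<Sum>i<n. complex_of_real (S$$(j,i)) * v$i * cnj (v$j))"
    by (intro sum.cong refl, simp add: sy)
  also have "\<dots> = Q" unfolding Q_def by (simp add: sum_distrib_left mult_ac)
  finally have Qr: "cnj Q = Q" .
  have Nr: "N = complex_of_real (\<Sum>i<n. (cmod (v$i))^2)"
    unfolding N_def of_real_sum by (rule sum.cong[OF refl]) (subst complex_norm_square, rule mult.commute)
  have "(\<Sum>i<n. (cmod (v$i))^2) \<noteq> 0"
  proof
    assume "(\<Sum>i<n. (cmod (v$i))^2) = 0"
    hence "\<forall>i<n. cmod (v$i) = 0" by (simp add: sum_sq_eq_0_iff)
    hence "v = 0\<^sub>v n" using v(1) by (intro eq_vecI) auto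
    thus False using v(2) by simp
  qed
  hence N0: "N \<noteq> 0" unfolding Nr of_real_eq_0_iff .
  have "cnj N = N" using Nr by simp
  hence "cnj e * N = e * N" using Qr unfolding QN complex_cnj_mult by simp
  hence ce: "cnj e = e" using N0 by simp
  have "Im e = 0" using arg_cong[OF ce, of Im] by simp
  hence er: "e = complex_of_real (Re e)" by (simp add: complex_eq_iff)
  define a where "a = Re e"
  have rp: "\<And>i. i<n \<Longrightarrow> (\<Sum>j<n. S$$(i,j) * Re (v$j)) = a * Re (v$i)"
  proof -
    fix i assume i: "i<n"
    have ea: "e = complex_of_real a" using er a_def by simp
    have "(\<Sum>j<n. complex_of_real (S$$(i,j)) * v$j) = complex_of_real a * v$i" using eq[OF i] unfolding ea .
    hence "Re (\<Sum>j<n. complex_of_real (S$$(i,j)) * v$j) = Re (complex_of_real a * v$i)" by (rule arg_cong)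
    thus "(\<Sum>j<n. S$$(i,j) * Re (v$j)) = a * Re (v$i)" by (simp add: Re_sum)
  qed
  have ip: "\<And>i. i<n \<Longrightarrow> (\<Sum>j<n. S$$(i,j) * Im (v$j)) = a * Im (v$i)"
  proof -
    fix i assume i: "i<n"
    have ea: "e = complex_of_real a" using er a_def by simp
    have "(\<Sum>j<n. complex_of_real (S$$(i,j)) * v$j) = complex_of_real a * v$i" using eq[OF i] unfolding ea .
    hence "Im (\<Sum>j<n. complex_of_real (S$$(i,j)) * v$j) = Im (complex_of_real a * v$i)" by (rule arg_cong)
    thus "(\<Sum>j<n. S$$(i,j) * Im (v$j)) = a * Im (v$i)" by (simp add: Im_sum)
  qed
  have "\<exists>y. (\<forall>i<n. (\<Sum>j<n. S$$(i,j) * y j) = a * y i) \<and> (\<Sum>i<n. (y i)^2) \<noteq> 0"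
  proof (cases "(\<Sum>i<n. (Re (v$i))^2) = 0")
    case False thus ?thesis using rp by (intro exI[of _ "\<lambda>j. Re (v$j)"]) simp
  next
    case True
    have "(\<Sum>i<n. (Im (v$i))^2) \<noteq> 0"
    proof
      assume "(\<Sum>i<n. (Im (v$i))^2) = 0"
      with True have "\<forall>i<n. Re (v$i) = 0 \<and> Im (v$i) = 0" by (simp add: sum_sq_eq_0_iff)
      hence "v = 0\<^sub>v n" using v(1) by (intro eq_vecI) (auto simp: complex_eq_iff)
      thus False using v(2) by simp
    qed
    thus ?thesis using ip by (intro exI[of _ "\<lambda>j. Im (v$j)"]) simp
  qed
  then obtain y where y: "\<forall>i<n. (\<Sum>j<n. S$$(i,j) * y j) = a * y i" "(\<Sum>i<n. (y i)^2) \<noteq> 0" by blast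
  define M where "M = (\<Sum>i<n. (y i)^2)"
  have "M \<ge> 0" unfolding M_def by (intro sum_nonneg) auto
  hence Mpos: "M > 0" using y(2) unfolding M_def by linarith
  define x where "x = (\<lambda>i. y i / sqrt M)"
  have "(\<Sum>i<n. (x i)^2) = (\<Sum>i<n. (y i)^2 / M)" unfolding x_def using Mpos by (simp add: power_divide)
  also have "\<dots> = 1" using Mpos by (simp add: sum_divide_distrib[symmetric] M_def[symmetric])
  finally have x1: "(\<Sum>i<n. (x i)^2) = 1" .
  have "\<forall>i<n. (\<Sum>j<n. S$$(i,j) * x j) = a * x i"
  proof (intro allI impI)
    fix i assume i: "i < n"
    have "(\<Sum>j<n. S$$(i,j) * x j) = (\<Sum>j<n. S$$(i,j) * y j) / sqrt M"
      unfolding x_def by (simp add: sum_divide_distrib)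
    also have "\<dots> = a * x i" using y(1) i unfolding x_def by simp
    finally show "(\<Sum>j<n. S$$(i,j) * x j) = a * x i" .
  qed
  with x1 show ?thesis by (intro exI[of _ a] exI[of _ x]) simp
qed

lemma sum_split_at:
  fixes g :: "nat \<Rightarrow> 'a::comm_monoid_add"
  assumes "k \<le> n"
  shows "(\<Sum>c<n. g c) = (\<Sum>c<k. g c) + (\<Sum>p<n-k. g (k+p))"
proof -
  have e: "{..<n} = {..<k} \<union> {k..<n}" using assms by auto
  have "(\<Sum>c<n. g c) = (\<Sum>c<k. g c) + (\<Sum>c\<in>{k..<n}. g c)"
    unfolding e by (rule sum.union_disjoint) auto
  also have "(\<Sum>c\<in>{k..<n}. g c) = (\<Sum>p<n-k. g (k+p))"
  proof -
    have "(\<Sum>c\<in>{k..<n}. g c) = (\<Sum>c\<in>{0+k..<(n-k)+k}. g c)" using assms by simp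
    also have "\<dots> = (\<Sum>p\<in>{0..<n-k}. g (p+k))" by (rule sum.shift_bounds_nat_ivl)
    finally show ?thesis by (simp add: atLeast0LessThan add.commute)
  qed
  finally show ?thesis .
qed

lemma delta_sum:
  fixes y :: "nat \<Rightarrow> real"
  shows "(\<Sum>q<m. y q * (if j = k + q then 1 else 0)) = (if k \<le> j \<and> j < k+m then y (j-k) else 0)"
proof (cases "k \<le> j \<and> j < k+m")
  case True
  have "(\<Sum>q<m. y q * (if j = k + q then 1 else 0)) = (\<Sum>q<m. if q = j - k then y q else 0)"
    by (rule sum.cong, insert True, auto)
  also have "\<dots> = y (j-k)" using True by (auto simp: sum.delta)
  finally show ?thesis using True by simp
next
  case False
  have "(\<Sum>q<m. y q * (if j = k + q then 1 else 0)) = (\<Sum>q<m. 0)"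
    by (rule sum.cong, insert False, auto)
  thus ?thesis using False by (simp only: if_False sum.neutral_const)
qed

lemma orth_coord:
  assumes U: "orth_mat n U" and j: "j < n" and km: "k + m \<le> n"
  shows "(\<Sum>a<n. U$$(a,j) * (\<Sum>q<m. U$$(a, k+q) * y q)) = (if k \<le> j \<and> j < k+m then y (j-k) else 0)"
proof -
  have "(\<Sum>a<n. U$$(a,j) * (\<Sum>q<m. U$$(a, k+q) * y q)) = (\<Sum>a<n. \<Sum>q<m. y q * (U$$(a,j) * U$$(a, k+q)))"
    by (simp add: sum_distrib_left mult_ac)
  also have "\<dots> = (\<Sum>q<m. \<Sum>a<n. y q * (U$$(a,j) * U$$(a, k+q)))" by (rule sum.swap)
  also have "\<dots> = (\<Sum>q<m. y q * (\<Sum>a<n. U$$(a,j) * U$$(a, k+q)))" by (simp add: sum_distrib_left)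
  also have "\<dots> = (\<Sum>q<m. y q * (if j = k + q then 1 else 0))"
    by (rule sum.cong[OF refl], subst orth_mat_cols[OF U j], insert km, auto)
  also have "\<dots> = (if k \<le> j \<and> j < k+m then y (j-k) else 0)" by (rule delta_sum)
  finally show ?thesis .
qed

lemma orth_recon:
  assumes U: "orth_mat n U" and i: "i < n"
  shows "(\<Sum>c<n. U$$(i,c) * (\<Sum>a<n. U$$(a,c) * f a)) = f i"
proof -
  have "(\<Sum>c<n. U$$(i,c) * (\<Sum>a<n. U$$(a,c) * f a)) = (\<Sum>c<n. \<Sum>a<n. f a * (U$$(i,c) * U$$(a,c)))"
    by (simp add: sum_distrib_left mult_ac)
  also have "\<dots> = (\<Sum>a<n. \<Sum>c<n. f a * (U$$(i,c) * U$$(a,c)))" by (rule sum.swap)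
  also have "\<dots> = (\<Sum>a<n. f a * (\<Sum>c<n. U$$(i,c) * U$$(a,c)))" by (simp add: sum_distrib_left)
  also have "\<dots> = (\<Sum>a<n. f a * (if i = a then 1 else 0))"
    by (rule sum.cong[OF refl], subst orth_mat_rows[OF U i], auto)
  also have "\<dots> = (\<Sum>a<n. if a = i then f a else 0)" by (rule sum.cong, auto)
  also have "\<dots> = f i" using i by (simp add: sum.delta)
  finally show ?thesis .
qed

lemma orth_mat_one: "orth_mat n (1\<^sub>m n)"
  unfolding orth_mat_def by auto

lemma spectral_aux:
  assumes S: "symm n S"
  shows "k \<le> n \<Longrightarrow> \<exists>U d. orth_mat n U \<and> (\<forall>j<k. \<forall>i<n. (\<Sum>b<n. S$$(i,b) * U$$(b,j)) = d j * U$$(i,j))"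
proof (induction k)
  case 0
  show ?case using orth_mat_one by blast
next
  case (Suc k)
  hence kn: "k < n" by auto
  from Suc obtain U d where U: "orth_mat n U" and
    eig: "\<forall>j<k. \<forall>i<n. (\<Sum>b<n. S$$(i,b) * U$$(b,j)) = d j * U$$(i,j)" by auto
  have Sc: "S \<in> carrier_mat n n" and sy: "\<And>i j. i<n \<Longrightarrow> j<n \<Longrightarrow> S$$(i,j) = S$$(j,i)"
    using S unfolding symm_def by auto
  define m where "m = n - k"
  have km: "k + m = n" and m0: "m > 0" using kn unfolding m_def by auto
  define C where "C = mat m m (\<lambda>(p,q). \<Sum>a<n. \<Sum>b<n. U$$(a,k+p) * S$$(a,b) * U$$(b,k+q))"
  have symC: "symm m C" unfolding symm_def
  proof (intro conjI allI impI)
    show "C \<in> carrier_mat m m" unfolding C_def by auto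
    fix p q assume p: "p < m" and q: "q < m"
    have "C$$(p,q) = (\<Sum>a<n. \<Sum>b<n. U$$(a,k+p) * S$$(a,b) * U$$(b,k+q))" using p q unfolding C_def by simp
    also have "\<dots> = (\<Sum>b<n. \<Sum>a<n. U$$(a,k+p) * S$$(a,b) * U$$(b,k+q))" by (rule sum.swap)
    also have "\<dots> = (\<Sum>b<n. \<Sum>a<n. U$$(b,k+q) * S$$(b,a) * U$$(a,k+p))"
      by (intro sum.cong refl, simp add: sy mult_ac)
    also have "\<dots> = C$$(q,p)" using p q unfolding C_def by simp
    finally show "C$$(p,q) = C$$(q,p)" .
  qed
  obtain lam y where ey: "\<forall>p<m. (\<Sum>q<m. C$$(p,q) * y q) = lam * y p" and y1: "(\<Sum>q<m. (y q)^2) = 1"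
    using real_eigvec[OF symC m0] by blast
  define w where "w = (\<lambda>a. \<Sum>q<m. U$$(a,k+q) * y q)"
  have cw: "\<And>c. c<n \<Longrightarrow> (\<Sum>a<n. U$$(a,c) * w a) = (if k \<le> c \<and> c < k+m then y (c-k) else 0)"
    unfolding w_def by (rule orth_coord[OF U _ ], insert km, auto)
  have cSw: "\<And>c. c<n \<Longrightarrow> (\<Sum>a<n. U$$(a,c) * (\<Sum>b<n. S$$(a,b) * w b)) = (if k \<le> c \<and> c < k+m then lam * y (c-k) else 0)"
  proof -
    fix c assume c: "c < n"
    have "(\<Sum>a<n. U$$(a,c) * (\<Sum>b<n. S$$(a,b) * w b)) = (\<Sum>a<n. \<Sum>b<n. U$$(a,c) * S$$(a,b) * w b)"
      by (simp add: sum_distrib_left mult_ac)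
    also have "\<dots> = (\<Sum>b<n. \<Sum>a<n. U$$(a,c) * S$$(a,b) * w b)" by (rule sum.swap)
    also have "\<dots> = (\<Sum>b<n. w b * (\<Sum>a<n. S$$(b,a) * U$$(a,c)))"
      by (intro sum.cong refl, simp add: sum_distrib_left sy mult_ac)
    finally have e1: "(\<Sum>a<n. U$$(a,c) * (\<Sum>b<n. S$$(a,b) * w b)) = (\<Sum>b<n. w b * (\<Sum>a<n. S$$(b,a) * U$$(a,c)))" .
    show "(\<Sum>a<n. U$$(a,c) * (\<Sum>b<n. S$$(a,b) * w b)) = (if k \<le> c \<and> c < k+m then lam * y (c-k) else 0)"
    proof (cases "c < k")
      case True
      have "(\<Sum>b<n. w b * (\<Sum>a<n. S$$(b,a) * U$$(a,c))) = (\<Sum>b<n. w b * (d c * U$$(b,c)))"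
        by (intro sum.cong refl, insert eig True, auto)
      also have "\<dots> = d c * (\<Sum>b<n. U$$(b,c) * w b)" by (simp add: sum_distrib_left mult_ac)
      also have "\<dots> = 0" using cw[OF c] True by simp
      finally show ?thesis using e1 True by simp
    next
      case False
      define p where "p = c - k"
      have p: "p < m" "c = k + p" using False c km unfolding p_def by auto
      have "(\<Sum>a<n. U$$(a,c) * (\<Sum>b<n. S$$(a,b) * w b)) = (\<Sum>a<n. \<Sum>b<n. \<Sum>q<m. U$$(a,k+p) * S$$(a,b) * U$$(b,k+q) * y q)"
        unfolding w_def p(2) by (simp add: sum_distrib_left mult_ac)
      also have "\<dots> = (\<Sum>a<n. \<Sum>q<m. \<Sum>b<n. U$$(a,k+p) * S$$(a,b) * U$$(b,k+q) * y q)"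
        by (rule sum.cong[OF refl], rule sum.swap)
      also have "\<dots> = (\<Sum>q<m. \<Sum>a<n. \<Sum>b<n. U$$(a,k+p) * S$$(a,b) * U$$(b,k+q) * y q)"
        by (rule sum.swap)
      also have "\<dots> = (\<Sum>q<m. C$$(p,q) * y q)"
        by (intro sum.cong refl, insert p, simp add: C_def sum_distrib_right)
      also have "\<dots> = lam * y p" using ey p by simp
      finally show ?thesis using p False unfolding p_def by simp
    qed
  qed
  have Sw: "\<And>i. i < n \<Longrightarrow> (\<Sum>b<n. S$$(i,b) * w b) = lam * w i"
  proof -
    fix i assume i: "i < n"
    have "(\<Sum>b<n. S$$(i,b) * w b) = (\<Sum>c<n. U$$(i,c) * (\<Sum>a<n. U$$(a,c) * (\<Sum>b<n. S$$(a,b) * w b)))"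
      using orth_recon[OF U i, of "\<lambda>a. \<Sum>b<n. S$$(a,b) * w b"] by simp
    also have "\<dots> = (\<Sum>c<n. U$$(i,c) * (lam * (\<Sum>a<n. U$$(a,c) * w a)))"
      by (intro sum.cong refl, simp add: cSw cw)
    also have "\<dots> = lam * (\<Sum>c<n. U$$(i,c) * (\<Sum>a<n. U$$(a,c) * w a))"
      by (simp add: sum_distrib_left mult_ac)
    also have "\<dots> = lam * w i" using orth_recon[OF U i, of w] by simp
    finally show "(\<Sum>b<n. S$$(i,b) * w b) = lam * w i" .
  qed
  have ww: "(\<Sum>a<n. w a * w a) = 1"
  proof -
    have "(\<Sum>a<n. w a * w a) = (\<Sum>a<n. \<Sum>q<m. y q * (U$$(a,k+q) * w a))"
      unfolding w_def by (simp add: sum_distrib_left sum_distrib_right mult_ac)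
    also have "\<dots> = (\<Sum>q<m. \<Sum>a<n. y q * (U$$(a,k+q) * w a))" by (rule sum.swap)
    also have "\<dots> = (\<Sum>q<m. y q * (\<Sum>a<n. U$$(a,k+q) * w a))" by (simp add: sum_distrib_left)
    also have "\<dots> = (\<Sum>q<m. y q * y q)"
      by (intro sum.cong refl, subst cw, insert km, auto)
    also have "\<dots> = 1" using y1 by (simp add: power2_eq_square)
    finally show ?thesis .
  qed
  define A' where "A' = mat n (Suc k) (\<lambda>(a,j). if j < k then U$$(a,j) else w a)"
  have oA: "orthonormal_cols n (Suc k) A'"
    unfolding orthonormal_cols_def
  proof (intro conjI allI impI)
    show "A' \<in> carrier_mat n (Suc k)" unfolding A'_def by auto
    fix i j assume i: "i < Suc k" and j: "j < Suc k"
    have e1: "(\<Sum>a<n. A'$$(a,i)*A'$$(a,j)) =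
         (\<Sum>a<n. (if i < k then U$$(a,i) else w a) * (if j < k then U$$(a,j) else w a))"
      by (rule sum.cong, insert i j, auto simp: A'_def)
    show "(\<Sum>a<n. A'$$(a,i)*A'$$(a,j)) = (if i = j then 1 else 0)"
      unfolding e1
    proof (cases "i < k"; cases "j < k")
      assume "i < k" "j < k" thus "(\<Sum>a<n. (if i < k then U$$(a,i) else w a) * (if j < k then U$$(a,j) else w a)) = (if i = j then 1 else 0)"
        using orth_mat_cols[OF U, of i j] kn by auto
    next
      assume a: "i < k" "\<not> j < k" thus "(\<Sum>a<n. (if i < k then U$$(a,i) else w a) * (if j < k then U$$(a,j) else w a)) = (if i = j then 1 else 0)"
        using cw[of i] kn by auto
    next
      assume a: "\<not> i < k" "j < k" thus "(\<Sum>a<n. (if i < k then U$$(a,i) else w a) * (if j < k then U$$(a,j) else w a)) = (if i = j then 1 else 0)"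
        using cw[of j] kn by (auto simp: mult.commute)
    next
      assume "\<not> i < k" "\<not> j < k" hence "i = k" "j = k" using i j by auto
      thus "(\<Sum>a<n. (if i < k then U$$(a,i) else w a) * (if j < k then U$$(a,j) else w a)) = (if i = j then 1 else 0)"
        using ww by simp
    qed
  qed
  obtain U' where U': "orth_mat n U'" and U'A: "\<forall>a<n. \<forall>j<Suc k. U'$$(a,j) = A'$$(a,j)"
    using orth_complete[OF oA] kn by auto
  have "\<forall>j<Suc k. \<forall>i<n. (\<Sum>b<n. S$$(i,b) * U'$$(b,j)) = (d(k:=lam)) j * U'$$(i,j)"
  proof (intro allI impI)
    fix j i assume j: "j < Suc k" and i: "i < n"
    show "(\<Sum>b<n. S$$(i,b) * U'$$(b,j)) = (d(k:=lam)) j * U'$$(i,j)"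
    proof (cases "j < k")
      case True
      have "(\<Sum>b<n. S$$(i,b) * U'$$(b,j)) = (\<Sum>b<n. S$$(i,b) * U$$(b,j))"
        by (intro sum.cong refl, insert U'A True, auto simp: A'_def)
      also have "\<dots> = d j * U$$(i,j)" using eig True i by auto
      finally show ?thesis using U'A True i by (auto simp: A'_def)
    next
      case False
      hence jk: "j = k" using j by auto
      have "(\<Sum>b<n. S$$(i,b) * U'$$(b,j)) = (\<Sum>b<n. S$$(i,b) * w b)"
        by (intro sum.cong refl, insert U'A jk, auto simp: A'_def)
      also have "\<dots> = lam * w i" using Sw i by auto
      finally show ?thesis using U'A jk i by (auto simp: A'_def)
    qed
  qed
  with U' show ?case by (intro exI[of _ U'] exI[of _ "d(k:=lam)"]) simp
qed

lemma spectral: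
  assumes S: "symm n S"
  shows "\<exists>U d. orth_mat n U \<and> (\<forall>j<n. \<forall>i<n. (\<Sum>b<n. S$$(i,b) * U$$(b,j)) = d j * U$$(i,j))"
  using spectral_aux[OF S, of n] by auto

lemma sort_perm:
  fixes d :: "nat \<Rightarrow> real"
  shows "\<exists>p. p permutes {..<n} \<and> (\<forall>i j. i \<le> j \<longrightarrow> j < n \<longrightarrow> d (p j) \<le> d (p i))"
proof -
  define ys where "ys = map d [0..<n]"
  define xs where "xs = rev (sort ys)"
  have "mset xs = mset ys" unfolding xs_def by simp
  then obtain p where p: "p permutes {..<length ys}" "permute_list p ys = xs"
    by (rule mset_eq_permutation)
  have ly: "length ys = n" unfolding ys_def by simp
  have lx: "length xs = n" unfolding xs_def using ly by simp
  have sx: "sorted_wrt (\<ge>) xs" unfolding xs_def sorted_wrt_rev by simp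
  have px: "\<And>i. i < n \<Longrightarrow> d (p i) = xs ! i"
  proof -
    fix i assume i: "i < n"
    have "p i < n" using p(1) i ly by (metis lessThan_iff permutes_in_image)
    hence "d (p i) = ys ! p i" unfolding ys_def by simp
    also have "\<dots> = permute_list p ys ! i" using i ly p(1) by (simp add: permute_list_nth)
    finally show "d (p i) = xs ! i" using p(2) by simp
  qed
  have "\<forall>i j. i \<le> j \<longrightarrow> j < n \<longrightarrow> d (p j) \<le> d (p i)"
  proof (intro allI impI)
    fix i j assume ij: "i \<le> j" "j < n"
    show "d (p j) \<le> d (p i)"
    proof (cases "i = j")
      case False
      hence "i < j" using ij by simp
      hence "xs ! j \<le> xs ! i" using sx ij lx by (simp add: sorted_wrt_iff_nth_less)
      thus ?thesis using px ij by simp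
    qed simp
  qed
  with p(1) ly show ?thesis by blast
qed

lemma downclosed_card:
  fixes S :: "nat set"
  assumes "S \<subseteq> {..<n}" "\<And>i j. j \<in> S \<Longrightarrow> i \<le> j \<Longrightarrow> i \<in> S"
  shows "S = {..<card S}"
proof (cases "S = {}")
  case True thus ?thesis by simp
next
  case False
  have fin: "finite S" using assms(1) finite_subset by blast
  define M where "M = Max S"
  have "M \<in> S" using fin False unfolding M_def by simp
  have "S = {..M}"
  proof
    show "S \<subseteq> {..M}" using fin unfolding M_def by auto
    show "{..M} \<subseteq> S" using \<open>M \<in> S\<close> assms(2) by auto
  qed
  thus ?thesis by (simp add: lessThan_Suc_atMost)
qed

lemma udv_entry:
  assumes U: "U \<in> carrier_mat m m" and V: "V \<in> carrier_mat n n" and mn: "m \<le> n"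
    and a: "a < m" and b: "b < n"
  shows "(U * rect_diag m n s * transpose_mat V) $$ (a,b) = (\<Sum>i<m. U$$(a,i) * s i * V$$(b,i))"
proof -
  have UR: "\<And>i. i < n \<Longrightarrow> (U * rect_diag m n s) $$ (a,i) = (if i < m then U$$(a,i) * s i else 0)"
  proof -
    fix i assume i: "i < n"
    have "(U * rect_diag m n s) $$ (a,i) = (\<Sum>c<m. U$$(a,c) * (if c = i then s c else 0))"
      using U a i by (simp add: rect_diag_def scalar_prod_def atLeast0LessThan)
    also have "\<dots> = (\<Sum>c<m. if c = i then U$$(a,c) * s c else 0)" by (rule sum.cong, auto)
    also have "\<dots> = (if i < m then U$$(a,i) * s i else 0)" by (simp add: sum.delta)
    finally show "(U * rect_diag m n s) $$ (a,i) = (if i < m then U$$(a,i) * s i else 0)" .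
  qed
  have "(U * rect_diag m n s * transpose_mat V) $$ (a,b) = (\<Sum>i<n. (U * rect_diag m n s) $$ (a,i) * V$$(b,i))"
    using U V a b by (simp add: rect_diag_def scalar_prod_def atLeast0LessThan)
  also have "\<dots> = (\<Sum>i<n. (if i < m then U$$(a,i) * s i else 0) * V$$(b,i))"
    by (rule sum.cong, auto simp: UR)
  also have "\<dots> = (\<Sum>i<m. (if i < m then U$$(a,i) * s i else 0) * V$$(b,i)) + (\<Sum>p<n-m. (if m+p < m then U$$(a,m+p) * s (m+p) else 0) * V$$(b,m+p))"
    by (rule sum_split_at[OF mn])
  also have "\<dots> = (\<Sum>i<m. U$$(a,i) * s i * V$$(b,i))" by simp
  finally show ?thesis .
qed

lemma udv_carrier:
  assumes U: "U \<in> carrier_mat m m" and V: "V \<in> carrier_mat n n"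
  shows "U * rect_diag m n s * transpose_mat V \<in> carrier_mat m n"
  using U V by (auto simp: rect_diag_def)

lemma svd_exists:
  assumes X: "X \<in> carrier_mat n1 n2" and dims: "n1 \<le> n2"
  shows "\<exists>U s V. is_svd n1 n2 X U s V"
proof -
  define S where "S = mat n1 n1 (\<lambda>(i,j). \<Sum>b<n2. X$$(i,b) * X$$(j,b))"
  have symS: "symm n1 S" unfolding symm_def S_def by (auto simp: mult.commute)
  obtain U0 d where U0: "orth_mat n1 U0" and
    eig0: "\<forall>j<n1. \<forall>i<n1. (\<Sum>b<n1. S$$(i,b) * U0$$(b,j)) = d j * U0$$(i,j)"
    using spectral[OF symS] by blast
  obtain p where p: "p permutes {..<n1}" and pmono: "\<forall>i j. i \<le> j \<longrightarrow> j < n1 \<longrightarrow> d (p j) \<le> d (p i)"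
    using sort_perm[of n1 d] by blast
  have pin: "\<And>i. i < n1 \<Longrightarrow> p i < n1" using p by (metis lessThan_iff permutes_in_image)
  have pinj: "\<And>i j. i < n1 \<Longrightarrow> j < n1 \<Longrightarrow> p i = p j \<longleftrightarrow> i = j"
    using p by (metis permutes_inj inj_eq)
  define U where "U = mat n1 n1 (\<lambda>(a,j). U0$$(a, p j))"
  define e where "e = (\<lambda>j. d (p j))"
  have Uc: "U \<in> carrier_mat n1 n1" unfolding U_def by auto
  have oU: "orth_mat n1 U" unfolding orth_mat_iff_cols orthonormal_cols_def
  proof (intro conjI allI impI Uc)
    fix i j assume i: "i < n1" and j: "j < n1"
    have "(\<Sum>a<n1. U$$(a,i)*U$$(a,j)) = (\<Sum>a<n1. U0$$(a,p i)*U0$$(a,p j))"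
      by (rule sum.cong, insert i j, auto simp: U_def)
    also have "\<dots> = (if p i = p j then 1 else 0)" using orth_mat_cols[OF U0 pin[OF i] pin[OF j]] .
    finally show "(\<Sum>a<n1. U$$(a,i)*U$$(a,j)) = (if i = j then 1 else 0)" using pinj[OF i j] by simp
  qed
  have eig: "\<And>i j. j<n1 \<Longrightarrow> i<n1 \<Longrightarrow> (\<Sum>b<n1. S$$(i,b) * U$$(b,j)) = e j * U$$(i,j)"
  proof -
    fix i j assume j: "j < n1" and i: "i < n1"
    have "(\<Sum>b<n1. S$$(i,b) * U$$(b,j)) = (\<Sum>b<n1. S$$(i,b) * U0$$(b,p j))"
      by (rule sum.cong, insert j, auto simp: U_def)
    also have "\<dots> = d (p j) * U0$$(i,p j)" using eig0 pin[OF j] i by auto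
    finally show "(\<Sum>b<n1. S$$(i,b) * U$$(b,j)) = e j * U$$(i,j)" using i j by (simp add: U_def e_def)
  qed
  define z where "z = (\<lambda>j b. \<Sum>a<n1. U$$(a,j) * X$$(a,b))"
  have zz: "\<And>i j. i<n1 \<Longrightarrow> j<n1 \<Longrightarrow> (\<Sum>b<n2. z i b * z j b) = (if i = j then e j else 0)"
  proof -
    fix i j assume i: "i < n1" and j: "j < n1"
    have "(\<Sum>b<n2. z i b * z j b) = (\<Sum>b<n2. \<Sum>a<n1. \<Sum>c<n1. (U$$(a,i) * X$$(a,b)) * (U$$(c,j) * X$$(c,b)))"
      unfolding z_def by (simp only: sum_product)
    also have "\<dots> = (\<Sum>a<n1. \<Sum>b<n2. \<Sum>c<n1. (U$$(a,i) * X$$(a,b)) * (U$$(c,j) * X$$(c,b)))"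
      by (rule sum.swap)
    also have "\<dots> = (\<Sum>a<n1. \<Sum>c<n1. \<Sum>b<n2. (U$$(a,i) * X$$(a,b)) * (U$$(c,j) * X$$(c,b)))"
      by (rule sum.cong[OF refl], rule sum.swap)
    also have "\<dots> = (\<Sum>a<n1. U$$(a,i) * (\<Sum>c<n1. S$$(a,c) * U$$(c,j)))"
      by (rule sum.cong[OF refl], simp add: S_def sum_distrib_left sum_distrib_right mult_ac)
    also have "\<dots> = (\<Sum>a<n1. U$$(a,i) * (e j * U$$(a,j)))"
      by (rule sum.cong[OF refl], simp add: eig j)
    also have "\<dots> = e j * (\<Sum>a<n1. U$$(a,i) * U$$(a,j))" by (simp add: sum_distrib_left mult_ac)
    also have "\<dots> = (if i = j then e j else 0)" using orth_mat_cols[OF oU i j] by simp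
    finally show "(\<Sum>b<n2. z i b * z j b) = (if i = j then e j else 0)" .
  qed
  have ez: "\<And>j. j < n1 \<Longrightarrow> e j = (\<Sum>b<n2. (z j b)^2)"
    using zz by (simp add: power2_eq_square)
  have enn: "\<And>j. j < n1 \<Longrightarrow> e j \<ge> 0" using ez by (simp add: sum_nonneg)
  define s where "s = (\<lambda>j. if j < n1 then sqrt (e j) else 0)"
  define P where "P = {j. j < n1 \<and> e j > 0}"
  define r where "r = card P"
  have Pr: "P = {..<r}" unfolding r_def
  proof (rule downclosed_card[of _ n1])
    show "P \<subseteq> {..<n1}" unfolding P_def by auto
    fix i j assume "j \<in> P" "i \<le> j"
    thus "i \<in> P" using pmono unfolding P_def e_def by force
  qed
  have rn1: "r \<le> n1"
  proof -
    have "P \<subseteq> {..<n1}" unfolding P_def by auto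
    hence "card P \<le> n1" using card_mono[of "{..<n1}" P] by simp
    thus ?thesis unfolding r_def .
  qed
  have epos: "\<And>j. j < n1 \<Longrightarrow> (e j > 0 \<longleftrightarrow> j < r)"
  proof -
    fix j assume "j < n1"
    hence "(e j > 0) = (j \<in> P)" unfolding P_def by auto
    thus "(e j > 0 \<longleftrightarrow> j < r)" unfolding Pr by simp
  qed
  define A where "A = mat n2 r (\<lambda>(b,j). z j b / s j)"
  have oA: "orthonormal_cols n2 r A" unfolding orthonormal_cols_def
  proof (intro conjI allI impI)
    show "A \<in> carrier_mat n2 r" unfolding A_def by auto
    fix i j assume i: "i < r" and j: "j < r"
    have i1: "i < n1" and j1: "j < n1" using i j rn1 by auto
    have "(\<Sum>b<n2. A$$(b,i)*A$$(b,j)) = (\<Sum>b<n2. z i b * z j b) / (s i * s j)"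
      by (simp add: A_def i j sum_divide_distrib)
    also have "\<dots> = (if i = j then 1 else 0)"
    proof (cases "i = j")
      case True
      have "e j > 0" using epos[OF j1] j by simp
      hence "s j * s j = e j" using j1 unfolding s_def by simp
      thus ?thesis using zz[OF i1 j1] True \<open>e j > 0\<close> by simp
    next
      case False thus ?thesis using zz[OF i1 j1] by simp
    qed
    finally show "(\<Sum>b<n2. A$$(b,i)*A$$(b,j)) = (if i = j then 1 else 0)" .
  qed
  obtain V where oV: "orth_mat n2 V" and VA: "\<forall>b<n2. \<forall>j<r. V$$(b,j) = A$$(b,j)"
    using orth_complete[OF oA] rn1 dims by auto
  have Vc: "V \<in> carrier_mat n2 n2" using oV unfolding orth_mat_def by auto
  have zs: "\<And>c b. c < n1 \<Longrightarrow> b < n2 \<Longrightarrow> z c b = s c * V$$(b,c)"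
  proof -
    fix c b assume c: "c < n1" and b: "b < n2"
    show "z c b = s c * V$$(b,c)"
    proof (cases "c < r")
      case True
      have "e c > 0" using epos[OF c] True by simp
      hence "s c > 0" using c unfolding s_def by simp
      thus ?thesis using VA b True by (simp add: A_def)
    next
      case False
      hence "e c = 0" using epos[OF c] enn[OF c] by simp
      hence "(\<Sum>b<n2. (z c b)^2) = 0" using ez[OF c] by simp
      hence "z c b = 0" using b by (simp add: sum_sq_eq_0_iff)
      moreover have "s c = 0" using \<open>e c = 0\<close> c unfolding s_def by simp
      ultimately show ?thesis by simp
    qed
  qed
  have Xeq: "X = U * rect_diag n1 n2 s * transpose_mat V"
  proof (rule eq_matI)
    show "dim_row X = dim_row (U * rect_diag n1 n2 s * transpose_mat V)" using X Uc by (simp add: rect_diag_def)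
    show "dim_col X = dim_col (U * rect_diag n1 n2 s * transpose_mat V)" using X Vc by (simp add: rect_diag_def)
    fix a b assume a: "a < dim_row (U * rect_diag n1 n2 s * transpose_mat V)"
      and b: "b < dim_col (U * rect_diag n1 n2 s * transpose_mat V)"
    have a1: "a < n1" and b2: "b < n2" using a b Uc Vc by (auto simp: rect_diag_def)
    have "X$$(a,b) = (\<Sum>c<n1. U$$(a,c) * z c b)"
      using orth_recon[OF oU a1, of "\<lambda>a'. X$$(a',b)"] unfolding z_def by simp
    also have "\<dots> = (\<Sum>c<n1. U$$(a,c) * s c * V$$(b,c))"
      by (rule sum.cong[OF refl], simp add: zs b2)
    also have "\<dots> = (U * rect_diag n1 n2 s * transpose_mat V) $$ (a,b)"
      using udv_entry[OF Uc Vc dims a1 b2] by simp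
    finally show "X$$(a,b) = (U * rect_diag n1 n2 s * transpose_mat V) $$ (a,b)" .
  qed
  have "is_svd n1 n2 X U s V" unfolding is_svd_def
  proof (intro conjI allI impI X oU oV Xeq)
    fix i assume "i < n1" thus "0 \<le> s i" unfolding s_def using enn by simp
  next
    fix i j assume ij: "i \<le> j" "j < n1"
    hence "e j \<le> e i" using pmono unfolding e_def by auto
    thus "s j \<le> s i" using ij unfolding s_def by simp
  next
    fix i assume "n1 \<le> i" thus "s i = 0" unfolding s_def by simp
  qed
  thus ?thesis by blast
qed

lemma order_lin_prod:
  fixes xs :: "real list"
  shows "Polynomial.order x (\<Prod>a\<leftarrow>xs. [:- a, 1:]) = count (mset xs) x"
proof (induction xs)
  case Nil
  show ?case by (simp add: order_0I)
next
  case (Cons a xs)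
  have nz: "(\<Prod>a\<leftarrow>xs. [:- a, 1:]) \<noteq> (0 :: real poly)"
    by (subst prod_list_zero_iff) auto
  have "[:- a, 1:] \<noteq> (0::real poly)" by simp
  hence "[:- a, 1:] * (\<Prod>a\<leftarrow>xs. [:- a, 1:]) \<noteq> (0 :: real poly)" using nz by (rule no_zero_divisors)
  hence "Polynomial.order x ([:- a, 1:] * (\<Prod>a\<leftarrow>xs. [:- a, 1:])) =
      Polynomial.order x [:- a, 1:] + Polynomial.order x (\<Prod>a\<leftarrow>xs. [:- a, 1:])"
    by (rule order_mult)
  thus ?case using Cons by (simp add: order_linear')
qed

lemma lin_prod_mset:
  fixes xs ys :: "real list"
  assumes "(\<Prod>a\<leftarrow>xs. [:- a, 1:]) = (\<Prod>a\<leftarrow>ys. [:- a, 1:])"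
  shows "mset xs = mset ys"
proof (rule multiset_eqI)
  fix x
  show "count (mset xs) x = count (mset ys) x"
    using order_lin_prod[of x xs] order_lin_prod[of x ys] assms by simp
qed

lemma sorted_desc_unique:
  fixes s t :: "nat \<Rightarrow> real"
  assumes ms: "mset (map s [0..<m]) = mset (map t [0..<m])"
    and s: "\<And>i j. i \<le> j \<Longrightarrow> j < m \<Longrightarrow> s j \<le> s i"
    and t: "\<And>i j. i \<le> j \<Longrightarrow> j < m \<Longrightarrow> t j \<le> t i"
  shows "\<And>i. i < m \<Longrightarrow> s i = t i"
proof -
  have ss: "sorted (rev (map s [0..<m]))"
    apply (subst sorted_wrt_rev) apply (subst sorted_wrt_iff_nth_less) using s by auto
  have st: "sorted (rev (map t [0..<m]))"
    apply (subst sorted_wrt_rev) apply (subst sorted_wrt_iff_nth_less) using t by auto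
  have m2: "mset (rev (map s [0..<m])) = mset (rev (map t [0..<m]))" using ms by simp
  have "sort (rev (map t [0..<m])) = rev (map s [0..<m])"
    by (rule properties_for_sort[OF m2 ss])
  moreover have "sort (rev (map t [0..<m])) = rev (map t [0..<m])"
    using st by (simp add: sorted_sort_id)
  ultimately have "map s [0..<m] = map t [0..<m]" by simp
  thus "\<And>i. i < m \<Longrightarrow> s i = t i" by (metis add_0 diff_zero nth_map_upt)
qed

lemma svd_XXT:
  assumes sv: "is_svd m n X U s V" and mn: "m \<le> n" and i: "i < m" and j: "j < m"
  shows "(\<Sum>b<n. X$$(i,b) * X$$(j,b)) = (\<Sum>k<m. U$$(i,k) * (s k)^2 * U$$(j,k))"
proof -
  have X: "X \<in> carrier_mat m n" and oU: "orth_mat m U" and oV: "orth_mat n V"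
    and Xe: "X = U * rect_diag m n s * transpose_mat V"
    using sv unfolding is_svd_def by auto
  have Uc: "U \<in> carrier_mat m m" and Vc: "V \<in> carrier_mat n n" using oU oV unfolding orth_mat_def by auto
  have Xab: "\<And>a b. a < m \<Longrightarrow> b < n \<Longrightarrow> X$$(a,b) = (\<Sum>k<m. U$$(a,k) * s k * V$$(b,k))"
    using udv_entry[OF Uc Vc mn] Xe by simp
  have "(\<Sum>b<n. X$$(i,b) * X$$(j,b)) = (\<Sum>b<n. \<Sum>k<m. \<Sum>l<m. (U$$(i,k) * s k * V$$(b,k)) * (U$$(j,l) * s l * V$$(b,l)))"
    by (rule sum.cong[OF refl], simp add: Xab i j sum_product)
  also have "\<dots> = (\<Sum>k<m. \<Sum>b<n. \<Sum>l<m. (U$$(i,k) * s k * V$$(b,k)) * (U$$(j,l) * s l * V$$(b,l)))"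
    by (rule sum.swap)
  also have "\<dots> = (\<Sum>k<m. \<Sum>l<m. \<Sum>b<n. (U$$(i,k) * s k * V$$(b,k)) * (U$$(j,l) * s l * V$$(b,l)))"
    by (rule sum.cong[OF refl], rule sum.swap)
  also have "\<dots> = (\<Sum>k<m. \<Sum>l<m. (U$$(i,k) * s k * U$$(j,l) * s l) * (\<Sum>b<n. V$$(b,k) * V$$(b,l)))"
    by (simp add: sum_distrib_left mult_ac)
  also have "\<dots> = (\<Sum>k<m. \<Sum>l<m. (U$$(i,k) * s k * U$$(j,l) * s l) * (if k = l then 1 else 0))"
    by (intro sum.cong refl, subst orth_mat_cols[OF oV], insert mn, auto)
  also have "\<dots> = (\<Sum>k<m. \<Sum>l<m. if l = k then U$$(i,k) * s k * U$$(j,l) * s l else 0)"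
    by (intro sum.cong refl, auto)
  also have "\<dots> = (\<Sum>k<m. U$$(i,k) * (s k)^2 * U$$(j,k))"
    by (rule sum.cong[OF refl], simp add: sum.delta power2_eq_square mult_ac)
  finally show ?thesis .
qed

lemma svd_unique:
  assumes sv1: "is_svd m n X U s V" and sv2: "is_svd m n X U' s' V'" and mn: "m \<le> n"
  shows "s = s'"
proof -
  define M where "M = mat m m (\<lambda>(i,j). \<Sum>b<n. X$$(i,b) * X$$(j,b))"
  have Mc: "M \<in> carrier_mat m m" unfolding M_def by simp
  have charM: "\<And>U s V. is_svd m n X U s V \<Longrightarrow> char_poly M = (\<Prod>a\<leftarrow>map (\<lambda>k. (s k)^2) [0..<m]. [:- a, 1:])"
  proof -
    fix U s V assume sv: "is_svd m n X U s V"
    have oU: "orth_mat m U" using sv unfolding is_svd_def by auto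
    have Uc: "U \<in> carrier_mat m m" using oU unfolding orth_mat_def by auto
    define D where "D = rect_diag m m (\<lambda>k. (s k)^2)"
    have Dc: "D \<in> carrier_mat m m" unfolding D_def rect_diag_def by simp
    have MD: "M = U * D * transpose_mat U"
    proof (rule eq_matI)
      fix i j assume i: "i < dim_row (U * D * transpose_mat U)" and j: "j < dim_col (U * D * transpose_mat U)"
      have i': "i < m" and j': "j < m" using i j Uc by auto
      show "M $$ (i,j) = (U * D * transpose_mat U) $$ (i,j)"
        unfolding D_def udv_entry[OF Uc Uc le_refl i' j'] using svd_XXT[OF sv mn i' j'] i' j'
        by (simp add: M_def)
    qed (insert Uc Dc, auto simp: M_def)
    have UUt: "U * transpose_mat U = 1\<^sub>m m"
      using oU Uc unfolding orth_mat_def by (metis mat_mult_left_right_inverse transpose_carrier_mat)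
    have UtU: "transpose_mat U * U = 1\<^sub>m m" using oU unfolding orth_mat_def by auto
    have "similar_mat_wit M D U (transpose_mat U)"
      unfolding similar_mat_wit_def Let_def using Mc Dc Uc UUt UtU MD by auto
    hence "similar_mat M D" unfolding similar_mat_def by blast
    hence "char_poly M = char_poly D" by (rule char_poly_similar)
    also have "\<dots> = (\<Prod>a\<leftarrow>diag_mat D. [:- a, 1:])"
      by (rule char_poly_upper_triangular[OF Dc], auto simp: upper_triangular_def D_def rect_diag_def)
    also have "diag_mat D = map (\<lambda>k. (s k)^2) [0..<m]"
      unfolding diag_mat_def D_def rect_diag_def by auto
    finally show "char_poly M = (\<Prod>a\<leftarrow>map (\<lambda>k. (s k)^2) [0..<m]. [:- a, 1:])" .
  qed
  have "mset (map (\<lambda>k. (s k)^2) [0..<m]) = mset (map (\<lambda>k. (s' k)^2) [0..<m])"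
    using charM[OF sv1] charM[OF sv2] by (intro lin_prod_mset) simp
  moreover have "\<And>i j. i \<le> j \<Longrightarrow> j < m \<Longrightarrow> (s j)^2 \<le> (s i)^2"
    using sv1 unfolding is_svd_def by (auto intro!: power_mono)
  moreover have "\<And>i j. i \<le> j \<Longrightarrow> j < m \<Longrightarrow> (s' j)^2 \<le> (s' i)^2"
    using sv2 unfolding is_svd_def by (auto intro!: power_mono)
  ultimately have sq: "\<And>i. i < m \<Longrightarrow> (s i)^2 = (s' i)^2"
    by (rule sorted_desc_unique)
  show "s = s'"
  proof
    fix i
    show "s i = s' i"
    proof (cases "i < m")
      case True
      have "0 \<le> s i" "0 \<le> s' i" using sv1 sv2 True unfolding is_svd_def by auto
      thus ?thesis using sq[OF True] by (simp add: power2_eq_iff_nonneg)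
    next
      case False thus ?thesis using sv1 sv2 unfolding is_svd_def by auto
    qed
  qed
qed

lemma sing_vals_svd:
  assumes X: "X \<in> carrier_mat n1 n2" and dims: "n1 \<le> n2"
  shows "\<exists>U V. is_svd n1 n2 X U (sing_vals X) V"
proof -
  obtain U s V where sv: "is_svd n1 n2 X U s V" using svd_exists[OF X dims] by blast
  have dr: "dim_row X = n1" "dim_col X = n2" using X by auto
  have "(THE s. \<exists>U V. is_svd n1 n2 X U s V) = s"
  proof (rule the_equality)
    show "\<exists>U V. is_svd n1 n2 X U s V" using sv by blast
    fix t assume "\<exists>U V. is_svd n1 n2 X U t V"
    then obtain U' V' where "is_svd n1 n2 X U' t V'" by blast
    thus "t = s" using svd_unique[OF _ sv dims] by blast
  qed
  hence "sing_vals X = s" unfolding sing_vals_def dr .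
  thus ?thesis using sv by blast
qed

lemma sing_vals_eq:
  assumes sv: "is_svd n1 n2 X U s V" and dims: "n1 \<le> n2"
  shows "sing_vals X = s"
proof -
  have X: "X \<in> carrier_mat n1 n2" using sv unfolding is_svd_def by auto
  obtain U' V' where "is_svd n1 n2 X U' (sing_vals X) V'" using sing_vals_svd[OF X dims] by blast
  thus ?thesis using svd_unique[OF _ sv dims] by blast
qed

lemma (in vec_space) rank_mult_le:
  assumes A: "A \<in> carrier_mat n k" and B: "B \<in> carrier_mat k l"
  shows "rank (A * B) \<le> rank A"
proof -
  have AB: "A * B \<in> carrier_mat n l" using A B by auto
  define W where "W = span (set (cols A))"
  have incl: "span (set (cols (A * B))) \<subseteq> W"
  proof
    fix y assume "y \<in> span (set (cols (A * B)))"
    hence "y \<in> col_space (A * B)" unfolding col_space_def .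
    then obtain x where x: "x \<in> carrier_vec (dim_col (A*B))" and y: "y \<in> carrier_vec (dim_row (A * B))"
      and yx: "(A * B) *\<^sub>v x = y"
      unfolding col_space_eq[OF AB] by auto
    have "y = A *\<^sub>v (B *\<^sub>v x)" using yx x A B by (auto simp: assoc_mult_mat_vec)
    moreover have "B *\<^sub>v x \<in> carrier_vec (dim_col A)" using A B by (intro carrier_vecI) simp
    moreover have "A *\<^sub>v (B *\<^sub>v x) \<in> carrier_vec (dim_row A)" using A by (intro carrier_vecI) simp
    ultimately have "y \<in> col_space A" unfolding col_space_eq[OF A] by auto
    thus "y \<in> W" unfolding W_def col_space_def .
  qed
  have subW: "subspace class_ring W V" unfolding W_def
    by (metis A cols_dim carrier_matD(1) span_is_subspace)
  have subAB: "subspace class_ring (span (set (cols (A * B)))) V"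
    by (metis AB cols_dim carrier_matD(1) span_is_subspace)
  have subspace: "subspace class_ring (span (set (cols (A * B)))) (vs W)"
    using nested_subspaces[OF subW subAB incl] .
  have finW: "vectorspace.fin_dim class_ring (vs W)" unfolding W_def using fin_dim_span_cols[OF A] .
  have finAB: "vectorspace.fin_dim class_ring (span_vs (set (cols (A * B))))" using fin_dim_span_cols[OF AB] by simp
  have "rank (A * B) \<le> vectorspace.dim class_ring (vs W)" unfolding rank_def
    using vectorspace.subspace_dim[OF subspace_is_vs[OF subW] subspace finW] finAB by auto
  thus ?thesis unfolding rank_def W_def .
qed

lemma rank_orthonormal:
  fixes Q :: "real mat"
  assumes o: "orthonormal_cols n r Q"
  shows "vec_space.rank n Q = r"
proof -
  interpret vec_space "TYPE(real)" n .
  have Q: "Q \<in> carrier_mat n r" and oq: "\<And>i j. i<r \<Longrightarrow> j<r \<Longrightarrow> (\<Sum>a<n. Q$$(a,i)*Q$$(a,j)) = (if i = j then 1 else 0)"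
    using o unfolding orthonormal_cols_def by auto
  have dist: "distinct (cols Q)"
  proof (rule ccontr)
    assume "\<not> distinct (cols Q)"
    then obtain i j where ij: "i \<noteq> j" "cols Q ! i = cols Q ! j" "i < length (cols Q)" "j < length (cols Q)"
      using distinct_conv_nth by blast
    hence ir: "i < r" "j < r" using Q by auto
    have "col Q i = col Q j" using ij Q by auto
    hence "\<And>a. a < n \<Longrightarrow> Q$$(a,i) = Q$$(a,j)" using ir Q by (metis carrier_matD(1) index_col ij(3) ij(4) cols_length)
    hence "(\<Sum>a<n. Q$$(a,i)*Q$$(a,j)) = (\<Sum>a<n. Q$$(a,i)*Q$$(a,i))" by (intro sum.cong) auto
    thus False using oq[OF ir(1) ir(2)] oq[OF ir(1) ir(1)] ij(1) by simp
  qed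
  have "lin_indpt (set (cols Q))"
  proof
    assume "lin_dep (set (cols Q))"
    then obtain v where v: "v \<in> carrier_vec r" "v \<noteq> 0\<^sub>v r" "Q *\<^sub>v v = 0\<^sub>v n"
      using lin_depE[OF Q _ dist] by blast
    have "\<And>j. j < r \<Longrightarrow> v$j = 0"
    proof -
      fix j assume j: "j < r"
      have z: "\<And>a. a < n \<Longrightarrow> (\<Sum>i<r. Q$$(a,i) * v$i) = 0"
      proof -
        fix a assume a: "a < n"
        have "(Q *\<^sub>v v) $ a = 0" using v(3) a by simp
        thus "(\<Sum>i<r. Q$$(a,i) * v$i) = 0" using a Q v(1) by (simp add: scalar_prod_def atLeast0LessThan)
      qed
      have "0 = (\<Sum>a<n. Q$$(a,j) * (\<Sum>i<r. Q$$(a,i) * v$i))" using z by simp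
      also have "\<dots> = (\<Sum>a<n. \<Sum>i<r. v$i * (Q$$(a,j) * Q$$(a,i)))" by (simp add: sum_distrib_left mult_ac)
      also have "\<dots> = (\<Sum>i<r. \<Sum>a<n. v$i * (Q$$(a,j) * Q$$(a,i)))" by (rule sum.swap)
      also have "\<dots> = (\<Sum>i<r. v$i * (if j = i then 1 else 0))"
        by (rule sum.cong[OF refl], simp add: sum_distrib_left[symmetric] oq j)
      also have "\<dots> = (\<Sum>i<r. if i = j then v$i else 0)" by (rule sum.cong, auto)
      also have "\<dots> = v$j" using j by (simp add: sum.delta)
      finally show "v$j = 0" by simp
    qed
    hence "v = 0\<^sub>v r" using v(1) by (intro eq_vecI) auto
    thus False using v(2) by simp
  qed
  thus ?thesis using lin_indpt_full_rank[OF Q dist] by blast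
qed

lemma svd_pos_prefix:
  assumes sv: "is_svd m n X U s V"
  shows "{i. i < m \<and> s i > 0} = {..<card {i. i < m \<and> s i > 0}}"
    and "card {i. i < m \<and> s i > 0} \<le> m"
proof -
  have mono: "\<And>i j. i \<le> j \<Longrightarrow> j < m \<Longrightarrow> s j \<le> s i" using sv unfolding is_svd_def by auto
  show "{i. i < m \<and> s i > 0} = {..<card {i. i < m \<and> s i > 0}}"
  proof (rule downclosed_card[of _ m])
    show "{i. i < m \<and> s i > 0} \<subseteq> {..<m}" by auto
    fix i j assume "j \<in> {i. i < m \<and> s i > 0}" "i \<le> j"
    thus "i \<in> {i. i < m \<and> s i > 0}" using mono[of i j] by auto
  qed
  have "{i. i < m \<and> s i > 0} \<subseteq> {..<m}" by auto
  thus "card {i. i < m \<and> s i > 0} \<le> m" using card_mono[of "{..<m}"] by fastforce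
qed

lemma svd_rank:
  assumes sv: "is_svd m n X U s V" and mn: "m \<le> n"
  shows "mrank X = card {i. i < m \<and> s i > 0}"
proof -
  define r where "r = card {i. i < m \<and> s i > 0}"
  have pre: "\<And>i. i < m \<Longrightarrow> (s i > 0 \<longleftrightarrow> i < r)"
    using svd_pos_prefix(1)[OF sv] unfolding r_def[symmetric] by (metis (mono_tags, lifting) lessThan_iff mem_Collect_eq)
  have rm: "r \<le> m" using svd_pos_prefix(2)[OF sv] unfolding r_def .
  have X: "X \<in> carrier_mat m n" and oU: "orth_mat m U" and oV: "orth_mat n V"
    and Xe: "X = U * rect_diag m n s * transpose_mat V" and snn: "\<And>i. i < m \<Longrightarrow> s i \<ge> 0"
    using sv unfolding is_svd_def by auto
  have Uc: "U \<in> carrier_mat m m" and Vc: "V \<in> carrier_mat n n" using oU oV unfolding orth_mat_def by auto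
  have Xab: "\<And>a b. a < m \<Longrightarrow> b < n \<Longrightarrow> X$$(a,b) = (\<Sum>k<m. U$$(a,k) * s k * V$$(b,k))"
    using udv_entry[OF Uc Vc mn] Xe by simp
  have s0: "\<And>i. r \<le> i \<Longrightarrow> i < m \<Longrightarrow> s i = 0" using pre snn by (meson not_le order_le_less)
  have Xab': "\<And>a b. a < m \<Longrightarrow> b < n \<Longrightarrow> X$$(a,b) = (\<Sum>k<r. U$$(a,k) * s k * V$$(b,k))"
  proof -
    fix a b assume a: "a < m" and b: "b < n"
    have "X$$(a,b) = (\<Sum>k<r. U$$(a,k) * s k * V$$(b,k)) + (\<Sum>p<m-r. U$$(a,r+p) * s (r+p) * V$$(b,r+p))"
      unfolding Xab[OF a b] by (rule sum_split_at[OF rm])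
    also have "(\<Sum>p<m-r. U$$(a,r+p) * s (r+p) * V$$(b,r+p)) = 0"
      by (rule sum.neutral, insert s0, auto)
    finally show "X$$(a,b) = (\<Sum>k<r. U$$(a,k) * s k * V$$(b,k))" by simp
  qed
  define U1 where "U1 = mat m r (\<lambda>(a,i). U$$(a,i))"
  have oU1: "orthonormal_cols m r U1" unfolding orthonormal_cols_def
  proof (intro conjI allI impI)
    show "U1 \<in> carrier_mat m r" unfolding U1_def by simp
    fix i j assume i: "i < r" and j: "j < r"
    have "(\<Sum>a<m. U1$$(a,i)*U1$$(a,j)) = (\<Sum>a<m. U$$(a,i)*U$$(a,j))"
      by (rule sum.cong, insert i j, auto simp: U1_def)
    thus "(\<Sum>a<m. U1$$(a,i)*U1$$(a,j)) = (if i = j then 1 else 0)"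
      using orth_mat_cols[OF oU, of i j] i j rm by simp
  qed
  have rU1: "vec_space.rank m U1 = r" by (rule rank_orthonormal[OF oU1])
  interpret vec_space "TYPE(real)" m .
  define C where "C = mat r n (\<lambda>(i,b). s i * V$$(b,i))"
  have XUC: "X = U1 * C"
  proof (rule eq_matI)
    fix a b assume a: "a < dim_row (U1 * C)" and b: "b < dim_col (U1 * C)"
    have a': "a < m" and b': "b < n" using a b by (auto simp: U1_def C_def)
    have "(U1 * C) $$ (a,b) = (\<Sum>k<r. U$$(a,k) * (s k * V$$(b,k)))"
      using a' b' by (simp add: U1_def C_def scalar_prod_def atLeast0LessThan)
    thus "X $$ (a,b) = (U1 * C) $$ (a,b)" using Xab'[OF a' b'] by (simp add: mult_ac)
  qed (insert X, auto simp: U1_def C_def)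
  have le1: "mrank X \<le> r"
  proof -
    have "mrank X = rank (U1 * C)" unfolding mrank_def using X XUC by (simp add: U1_def)
    also have "\<dots> \<le> rank U1" by (rule rank_mult_le[of _ r _ n], auto simp: U1_def C_def)
    finally show ?thesis using rU1 by simp
  qed
  define B where "B = mat n r (\<lambda>(b,i). V$$(b,i) / s i)"
  have U1XB: "U1 = X * B"
  proof (rule eq_matI)
    fix a i assume a: "a < dim_row (X * B)" and i: "i < dim_col (X * B)"
    have a': "a < m" and i': "i < r" using a i X by (auto simp: B_def)
    have si: "s i > 0" using pre[of i] i' rm by simp
    have "(X * B) $$ (a,i) = (\<Sum>b<n. X$$(a,b) * (V$$(b,i) / s i))"
      using a' i' X by (simp add: B_def scalar_prod_def atLeast0LessThan)
    also have "\<dots> = (\<Sum>b<n. \<Sum>k<m. U$$(a,k) * s k / s i * (V$$(b,k) * V$$(b,i)))"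
      by (rule sum.cong[OF refl], simp add: Xab a' sum_distrib_right sum_distrib_left sum_divide_distrib mult_ac)
    also have "\<dots> = (\<Sum>k<m. \<Sum>b<n. U$$(a,k) * s k / s i * (V$$(b,k) * V$$(b,i)))" by (rule sum.swap)
    also have "\<dots> = (\<Sum>k<m. U$$(a,k) * s k / s i * (if k = i then 1 else 0))"
      by (rule sum.cong[OF refl], subst sum_distrib_left[symmetric], subst orth_mat_cols[OF oV], insert i' rm mn, auto)
    also have "\<dots> = (\<Sum>k<m. if k = i then U$$(a,k) * s k / s i else 0)" by (rule sum.cong, auto)
    also have "\<dots> = U$$(a,i)" using si i' rm by (simp add: sum.delta)
    finally show "U1 $$ (a,i) = (X * B) $$ (a,i)" using a' i' by (simp add: U1_def)
  qed (insert X, auto simp: U1_def B_def)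
  have le2: "r \<le> mrank X"
  proof -
    have "r = rank (X * B)" using rU1 U1XB by simp
    also have "\<dots> \<le> rank X" by (rule rank_mult_le[of _ n _ r], insert X, auto simp: B_def)
    finally show ?thesis unfolding mrank_def using X by simp
  qed
  show ?thesis using le1 le2 unfolding r_def by simp
qed

lemma orth_quad:
  assumes P: "orth_mat m P"
  shows "(\<Sum>a<m. (\<Sum>k<m. P$$(a,k) * c k)^2) = (\<Sum>k<m. (c k)^2)"
proof -
  have "(\<Sum>a<m. (\<Sum>k<m. P$$(a,k) * c k)^2) = (\<Sum>a<m. \<Sum>k<m. \<Sum>l<m. (P$$(a,k) * c k) * (P$$(a,l) * c l))"
    by (simp only: power2_eq_square sum_product)
  also have "\<dots> = (\<Sum>k<m. \<Sum>a<m. \<Sum>l<m. (P$$(a,k) * c k) * (P$$(a,l) * c l))" by (rule sum.swap)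
  also have "\<dots> = (\<Sum>k<m. \<Sum>l<m. \<Sum>a<m. (P$$(a,k) * c k) * (P$$(a,l) * c l))"
    by (rule sum.cong[OF refl], rule sum.swap)
  also have "\<dots> = (\<Sum>k<m. \<Sum>l<m. (c k * c l) * (\<Sum>a<m. P$$(a,k) * P$$(a,l)))"
    by (simp add: sum_distrib_left mult_ac)
  also have "\<dots> = (\<Sum>k<m. \<Sum>l<m. (c k * c l) * (if k = l then 1 else 0))"
    by (intro sum.cong refl, subst orth_mat_cols[OF P], auto)
  also have "\<dots> = (\<Sum>k<m. \<Sum>l<m. if l = k then c k * c l else 0)"
    by (intro sum.cong refl, auto)
  also have "\<dots> = (\<Sum>k<m. (c k)^2)" by (simp add: sum.delta power2_eq_square)
  finally show ?thesis .
qed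

lemma orth_quad2:
  assumes Q: "orth_mat n Q"
  shows "(\<Sum>k<n. (\<Sum>b<n. Q$$(b,k) * c b)^2) = (\<Sum>b<n. (c b)^2)"
proof -
  have "(\<Sum>k<n. (\<Sum>b<n. Q$$(b,k) * c b)^2) = (\<Sum>k<n. \<Sum>b<n. \<Sum>b'<n. (Q$$(b,k) * c b) * (Q$$(b',k) * c b'))"
    by (simp only: power2_eq_square sum_product)
  also have "\<dots> = (\<Sum>b<n. \<Sum>k<n. \<Sum>b'<n. (Q$$(b,k) * c b) * (Q$$(b',k) * c b'))" by (rule sum.swap)
  also have "\<dots> = (\<Sum>b<n. \<Sum>b'<n. \<Sum>k<n. (Q$$(b,k) * c b) * (Q$$(b',k) * c b'))"
    by (rule sum.cong[OF refl], rule sum.swap)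
  also have "\<dots> = (\<Sum>b<n. \<Sum>b'<n. (c b * c b') * (\<Sum>k<n. Q$$(b,k) * Q$$(b',k)))"
    by (simp add: sum_distrib_left mult_ac)
  also have "\<dots> = (\<Sum>b<n. \<Sum>b'<n. (c b * c b') * (if b = b' then 1 else 0))"
    by (intro sum.cong refl, subst orth_mat_rows[OF Q], auto)
  also have "\<dots> = (\<Sum>b<n. \<Sum>b'<n. if b' = b then c b * c b' else 0)"
    by (intro sum.cong refl, auto)
  also have "\<dots> = (\<Sum>b<n. (c b)^2)" by (simp add: sum.delta power2_eq_square)
  finally show ?thesis .
qed

lemma ip_le:
  fixes u h :: "nat \<Rightarrow> real"
  assumes "(\<Sum>a<m. (u a)^2) = 1"
  shows "2 * (\<Sum>a<m. u a * h a) \<le> 1 + (\<Sum>a<m. (h a)^2)"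
proof -
  have "0 \<le> (\<Sum>a<m. (u a - h a)^2)" by (intro sum_nonneg) auto
  also have "\<dots> = (\<Sum>a<m. (u a)^2) + (\<Sum>a<m. (h a)^2) - 2 * (\<Sum>a<m. u a * h a)"
    by (simp add: power2_diff sum.distrib sum_subtractf sum_distrib_left mult_ac)
  finally show ?thesis using assms by simp
qed

lemma lower_count:
  assumes X: "X \<in> carrier_mat n1 n2" and W: "W \<in> carrier_mat n1 n2" and dims: "n1 \<le> n2"
    and eq: "nuc_norm X - mat_inner W X = 0" and sn: "spec_norm W \<le> 1"
  shows "mrank X \<le> card {k. k < n1 \<and> sing_vals W k = 1}"
    and "\<forall>k<n1. 0 \<le> sing_vals W k \<and> sing_vals W k \<le> 1"
proof -
  define s where "s = sing_vals X"
  define t where "t = sing_vals W"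
  obtain U V where svX: "is_svd n1 n2 X U s V" using sing_vals_svd[OF X dims] unfolding s_def by blast
  obtain P Q where svW: "is_svd n1 n2 W P t Q" using sing_vals_svd[OF W dims] unfolding t_def by blast
  have oU: "orth_mat n1 U" and oV: "orth_mat n2 V" and Xe: "X = U * rect_diag n1 n2 s * transpose_mat V"
    and snn: "\<And>i. i < n1 \<Longrightarrow> s i \<ge> 0"
    using svX unfolding is_svd_def by auto
  have oP: "orth_mat n1 P" and oQ: "orth_mat n2 Q" and We: "W = P * rect_diag n1 n2 t * transpose_mat Q"
    and tnn: "\<And>i. i < n1 \<Longrightarrow> t i \<ge> 0" and tmono: "\<And>i j. i \<le> j \<Longrightarrow> j < n1 \<Longrightarrow> t j \<le> t i"
    using svW unfolding is_svd_def by auto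
  have Uc: "U \<in> carrier_mat n1 n1" and Vc: "V \<in> carrier_mat n2 n2" using oU oV unfolding orth_mat_def by auto
  have Pc: "P \<in> carrier_mat n1 n1" and Qc: "Q \<in> carrier_mat n2 n2" using oP oQ unfolding orth_mat_def by auto
  have Xab: "\<And>a b. a < n1 \<Longrightarrow> b < n2 \<Longrightarrow> X$$(a,b) = (\<Sum>i<n1. U$$(a,i) * s i * V$$(b,i))"
    using udv_entry[OF Uc Vc dims] Xe by simp
  have Wab: "\<And>a b. a < n1 \<Longrightarrow> b < n2 \<Longrightarrow> W$$(a,b) = (\<Sum>k<n1. P$$(a,k) * t k * Q$$(b,k))"
    using udv_entry[OF Pc Qc dims] We by simp
  have t1: "\<forall>k<n1. 0 \<le> t k \<and> t k \<le> 1"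
  proof (intro allI impI conjI)
    fix k assume k: "k < n1"
    show "0 \<le> t k" using tnn k by simp
    have "spec_norm W = t 0" unfolding spec_norm_def t_def using W k by auto
    thus "t k \<le> 1" using tmono[of 0 k] k sn by simp
  qed
  thus "\<forall>k<n1. 0 \<le> sing_vals W k \<and> sing_vals W k \<le> 1" unfolding t_def .
  define h where "h = (\<lambda>i a. \<Sum>b<n2. W$$(a,b) * V$$(b,i))"
  define g where "g = (\<lambda>i. \<Sum>a<n1. U$$(a,i) * h i a)"
  define y where "y = (\<lambda>i k. \<Sum>b<n2. Q$$(b,k) * V$$(b,i))"
  have nuc: "nuc_norm X = (\<Sum>i<n1. s i)" unfolding nuc_norm_def s_def using X by simp
  have inner: "mat_inner W X = (\<Sum>i<n1. s i * g i)"
  proof -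
    have "mat_inner W X = (\<Sum>a<n1. \<Sum>b<n2. W$$(a,b) * X$$(a,b))" unfolding mat_inner_def using X by simp
    also have "\<dots> = (\<Sum>a<n1. \<Sum>b<n2. \<Sum>i<n1. s i * (U$$(a,i) * (W$$(a,b) * V$$(b,i))))"
      by (intro sum.cong refl, simp add: Xab sum_distrib_left mult_ac)
    also have "\<dots> = (\<Sum>a<n1. \<Sum>i<n1. \<Sum>b<n2. s i * (U$$(a,i) * (W$$(a,b) * V$$(b,i))))"
      by (rule sum.cong[OF refl], rule sum.swap)
    also have "\<dots> = (\<Sum>i<n1. \<Sum>a<n1. \<Sum>b<n2. s i * (U$$(a,i) * (W$$(a,b) * V$$(b,i))))"
      by (rule sum.swap)
    also have "\<dots> = (\<Sum>i<n1. s i * g i)"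
      unfolding g_def h_def by (simp add: sum_distrib_left)
    finally show ?thesis .
  qed
  have hform: "\<And>i a. a < n1 \<Longrightarrow> h i a = (\<Sum>k<n1. P$$(a,k) * (t k * y i k))"
  proof -
    fix i a assume a: "a < n1"
    have "h i a = (\<Sum>b<n2. \<Sum>k<n1. P$$(a,k) * (t k * (Q$$(b,k) * V$$(b,i))))"
      unfolding h_def by (intro sum.cong refl, simp add: Wab a sum_distrib_right sum_distrib_left mult_ac)
    also have "\<dots> = (\<Sum>k<n1. \<Sum>b<n2. P$$(a,k) * (t k * (Q$$(b,k) * V$$(b,i))))" by (rule sum.swap)
    also have "\<dots> = (\<Sum>k<n1. P$$(a,k) * (t k * y i k))" unfolding y_def by (simp add: sum_distrib_left)
    finally show "h i a = (\<Sum>k<n1. P$$(a,k) * (t k * y i k))" .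
  qed
  define H where "H = (\<lambda>i. \<Sum>a<n1. (h i a)^2)"
  have Hform: "\<And>i. H i = (\<Sum>k<n1. (t k * y i k)^2)"
  proof -
    fix i
    have "H i = (\<Sum>a<n1. (\<Sum>k<n1. P$$(a,k) * (t k * y i k))^2)" unfolding H_def
      by (intro sum.cong refl, simp add: hform)
    also have "\<dots> = (\<Sum>k<n1. (t k * y i k)^2)" by (rule orth_quad[OF oP])
    finally show "H i = (\<Sum>k<n1. (t k * y i k)^2)" .
  qed
  have Y1: "\<And>i. i < n2 \<Longrightarrow> (\<Sum>k<n2. (y i k)^2) = 1"
  proof -
    fix i assume i: "i < n2"
    have "(\<Sum>k<n2. (y i k)^2) = (\<Sum>b<n2. (V$$(b,i))^2)" unfolding y_def by (rule orth_quad2[OF oQ])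
    also have "\<dots> = 1" using orth_mat_cols[OF oV i i] by (simp add: power2_eq_square)
    finally show "(\<Sum>k<n2. (y i k)^2) = 1" .
  qed
  have Ycol: "\<And>k. k < n2 \<Longrightarrow> (\<Sum>i<n2. (y i k)^2) = 1"
  proof -
    fix k assume k: "k < n2"
    have "(\<Sum>i<n2. (y i k)^2) = (\<Sum>i<n2. (\<Sum>b<n2. V$$(b,i) * Q$$(b,k))^2)"
      unfolding y_def by (simp add: mult.commute)
    also have "\<dots> = (\<Sum>b<n2. (Q$$(b,k))^2)" by (rule orth_quad2[OF oV])
    also have "\<dots> = 1" using orth_mat_cols[OF oQ k k] by (simp add: power2_eq_square)
    finally show "(\<Sum>i<n2. (y i k)^2) = 1" .
  qed
  define tau where "tau = (\<lambda>k. if k < n1 then t k else 0)"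
  have tau1: "\<And>k. 0 \<le> tau k \<and> tau k \<le> 1" unfolding tau_def using t1 by auto
  have Htau: "\<And>i. H i = (\<Sum>k<n2. (tau k * y i k)^2)"
  proof -
    fix i
    have "(\<Sum>k<n2. (tau k * y i k)^2) = (\<Sum>k<n1. (tau k * y i k)^2) + (\<Sum>p<n2-n1. (tau (n1+p) * y i (n1+p))^2)"
      by (rule sum_split_at[OF dims])
    also have "\<dots> = (\<Sum>k<n1. (t k * y i k)^2)" by (simp add: tau_def)
    finally show "H i = (\<Sum>k<n2. (tau k * y i k)^2)" using Hform by simp
  qed
  have Hle: "\<And>i. i < n2 \<Longrightarrow> H i \<le> 1"
  proof -
    fix i assume i: "i < n2"
    have "H i \<le> (\<Sum>k<n2. (y i k)^2)" unfolding Htau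
    proof (rule sum_mono)
      fix k
      have "(tau k * y i k)^2 = (tau k)^2 * (y i k)^2" by (simp add: power_mult_distrib)
      also have "\<dots> \<le> 1 * (y i k)^2" using tau1[of k] by (intro mult_right_mono) (auto simp: power_le_one)
      finally show "(tau k * y i k)^2 \<le> (y i k)^2" by simp
    qed
    thus "H i \<le> 1" using Y1[OF i] by simp
  qed
  have ucol: "\<And>i. i < n1 \<Longrightarrow> (\<Sum>a<n1. (U$$(a,i))^2) = 1"
    using orth_mat_cols[OF oU] by (simp add: power2_eq_square)
  have gle: "\<And>i. i < n1 \<Longrightarrow> g i \<le> 1"
  proof -
    fix i assume i: "i < n1"
    have "2 * g i \<le> 1 + H i" unfolding g_def H_def by (rule ip_le[OF ucol[OF i]])
    thus "g i \<le> 1" using Hle[of i] i dims by simp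
  qed
  have sum0: "(\<Sum>i<n1. s i * (1 - g i)) = 0"
    using eq unfolding nuc inner by (simp add: algebra_simps sum_subtractf)
  have g1: "\<And>i. i < n1 \<Longrightarrow> s i > 0 \<Longrightarrow> g i = 1"
  proof -
    fix i assume i: "i < n1" and si: "s i > 0"
    have "\<forall>j\<in>{..<n1}. s j * (1 - g j) = 0"
      using sum_nonneg_eq_0_iff[of "{..<n1}" "\<lambda>j. s j * (1 - g j)"] sum0 snn gle by auto
    hence "s i * (1 - g i) = 0" using i by auto
    thus "g i = 1" using si by simp
  qed
  have H1: "\<And>i. i < n1 \<Longrightarrow> s i > 0 \<Longrightarrow> H i = 1"
  proof -
    fix i assume i: "i < n1" and si: "s i > 0"
    have "2 * g i \<le> 1 + H i" unfolding g_def H_def by (rule ip_le[OF ucol[OF i]])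
    thus "H i = 1" using g1[OF i si] Hle[of i] i dims by simp
  qed
  define J where "J = {k. k < n1 \<and> t k = 1}"
  have yz: "\<And>i k. i < n1 \<Longrightarrow> s i > 0 \<Longrightarrow> k < n2 \<Longrightarrow> k \<notin> J \<Longrightarrow> y i k = 0"
  proof -
    fix i k assume i: "i < n1" and si: "s i > 0" and k: "k < n2" and kJ: "k \<notin> J"
    have "(\<Sum>k<n2. (1 - (tau k)^2) * (y i k)^2) = (\<Sum>k<n2. (y i k)^2) - H i"
      unfolding Htau by (simp add: algebra_simps sum_subtractf power_mult_distrib)
    also have "\<dots> = 0" using Y1[of i] H1[OF i si] i dims by simp
    finally have z: "(\<Sum>k<n2. (1 - (tau k)^2) * (y i k)^2) = 0" .
    have nn: "\<forall>k\<in>{..<n2}. 0 \<le> (1 - (tau k)^2) * (y i k)^2"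
      using tau1 by (auto intro!: mult_nonneg_nonneg simp: power_le_one)
    have "\<forall>k\<in>{..<n2}. (1 - (tau k)^2) * (y i k)^2 = 0"
      using sum_nonneg_eq_0_iff[of "{..<n2}" "\<lambda>k. (1 - (tau k)^2) * (y i k)^2"] z nn by blast
    hence "(1 - (tau k)^2) * (y i k)^2 = 0" using k by blast
    moreover have "tau k \<noteq> 1" using kJ unfolding J_def tau_def by auto
    hence "(tau k)^2 < 1" using tau1[of k] by (metis abs_of_nonneg abs_square_less_1 order_le_less)
    ultimately show "y i k = 0" by simp
  qed
  define r where "r = card {i. i < n1 \<and> s i > 0}"
  have rank: "mrank X = r" unfolding r_def by (rule svd_rank[OF svX dims])
  have pre: "\<And>i. i < n1 \<Longrightarrow> (s i > 0 \<longleftrightarrow> i < r)"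
    using svd_pos_prefix(1)[OF svX] unfolding r_def[symmetric] by (metis (mono_tags, lifting) lessThan_iff mem_Collect_eq)
  have rn: "r \<le> n1" using svd_pos_prefix(2)[OF svX] unfolding r_def .
  have Jsub: "J \<subseteq> {..<n2}" unfolding J_def using dims by auto
  have finJ: "finite J" using Jsub finite_subset by blast
  have "real r = (\<Sum>i<r. \<Sum>k<n2. (y i k)^2)" using Y1 rn dims by simp
  also have "\<dots> = (\<Sum>i<r. \<Sum>k\<in>J. (y i k)^2)"
  proof (rule sum.cong[OF refl])
    fix i assume "i \<in> {..<r}"
    hence i: "i < n1" "s i > 0" using pre rn by auto
    show "(\<Sum>k<n2. (y i k)^2) = (\<Sum>k\<in>J. (y i k)^2)"
      by (rule sum.mono_neutral_right[OF _ Jsub], insert yz[OF i], auto)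
  qed
  also have "\<dots> = (\<Sum>k\<in>J. \<Sum>i<r. (y i k)^2)" by (rule sum.swap)
  also have "\<dots> \<le> (\<Sum>k\<in>J. \<Sum>i<n2. (y i k)^2)"
  proof (rule sum_mono)
    fix k assume "k \<in> J"
    show "(\<Sum>i<r. (y i k)^2) \<le> (\<Sum>i<n2. (y i k)^2)"
      by (rule sum_mono2, insert rn dims, auto)
  qed
  also have "\<dots> = (\<Sum>k\<in>J. 1)" by (rule sum.cong[OF refl], insert Jsub Ycol, auto)
  also have "\<dots> = real (card J)" by simp
  finally have "r \<le> card J" by simp
  thus "mrank X \<le> card {k. k < n1 \<and> sing_vals W k = 1}" using rank unfolding J_def t_def by simp
qed

lemma sum_one_ereal: "(\<Sum>i\<in>J. (1::ereal)) = ereal (real (card J))"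
proof -
  have "(\<Sum>i\<in>J. (1::ereal)) = ereal (\<Sum>i\<in>J. 1)" unfolding one_ereal_def by (rule sum_ereal)
  thus ?thesis by simp
qed

lemma udv_entry_gen:
  assumes U: "U \<in> carrier_mat p m" and V: "V \<in> carrier_mat q n" and mn: "m \<le> n"
    and a: "a < p" and b: "b < q"
  shows "(U * rect_diag m n s * transpose_mat V) $$ (a,b) = (\<Sum>i<m. U$$(a,i) * s i * V$$(b,i))"
proof -
  have UR: "\<And>i. i < n \<Longrightarrow> (U * rect_diag m n s) $$ (a,i) = (if i < m then U$$(a,i) * s i else 0)"
  proof -
    fix i assume i: "i < n"
    have "(U * rect_diag m n s) $$ (a,i) = (\<Sum>c<m. U$$(a,c) * (if c = i then s c else 0))"
      using U a i by (simp add: rect_diag_def scalar_prod_def atLeast0LessThan)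
    also have "\<dots> = (\<Sum>c<m. if c = i then U$$(a,c) * s c else 0)" by (rule sum.cong, auto)
    also have "\<dots> = (if i < m then U$$(a,i) * s i else 0)" by (simp add: sum.delta)
    finally show "(U * rect_diag m n s) $$ (a,i) = (if i < m then U$$(a,i) * s i else 0)" .
  qed
  have "(U * rect_diag m n s * transpose_mat V) $$ (a,b) = (\<Sum>i<n. (U * rect_diag m n s) $$ (a,i) * V$$(b,i))"
    using U V a b by (simp add: rect_diag_def scalar_prod_def atLeast0LessThan)
  also have "\<dots> = (\<Sum>i<n. (if i < m then U$$(a,i) * s i else 0) * V$$(b,i))"
    by (rule sum.cong, auto simp: UR)
  also have "\<dots> = (\<Sum>i<m. (if i < m then U$$(a,i) * s i else 0) * V$$(b,i)) + (\<Sum>p<n-m. (if m+p < m then U$$(a,m+p) * s (m+p) else 0) * V$$(b,m+p))"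
    by (rule sum_split_at[OF mn])
  also have "\<dots> = (\<Sum>i<m. U$$(a,i) * s i * V$$(b,i))" by simp
  finally show ?thesis .
qed

lemma inner_svd:
  assumes oU: "orth_mat n1 U" and oV: "orth_mat n2 V" and dims: "n1 \<le> n2"
  shows "mat_inner (U * rect_diag n1 n2 w * transpose_mat V) (U * rect_diag n1 n2 s * transpose_mat V)
     = (\<Sum>i<n1. w i * s i)"
proof -
  have Uc: "U \<in> carrier_mat n1 n1" and Vc: "V \<in> carrier_mat n2 n2" using oU oV unfolding orth_mat_def by auto
  let ?A = "U * rect_diag n1 n2 w * transpose_mat V"
  let ?B = "U * rect_diag n1 n2 s * transpose_mat V"
  have Aab: "\<And>a b. a < n1 \<Longrightarrow> b < n2 \<Longrightarrow> ?A$$(a,b) = (\<Sum>i<n1. U$$(a,i) * w i * V$$(b,i))"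
    using udv_entry[OF Uc Vc dims] by simp
  have Bab: "\<And>a b. a < n1 \<Longrightarrow> b < n2 \<Longrightarrow> ?B$$(a,b) = (\<Sum>j<n1. U$$(a,j) * s j * V$$(b,j))"
    using udv_entry[OF Uc Vc dims] by simp
  have AV: "\<And>a j. a < n1 \<Longrightarrow> j < n1 \<Longrightarrow> (\<Sum>b<n2. ?A$$(a,b) * V$$(b,j)) = U$$(a,j) * w j"
  proof -
    fix a j assume a: "a < n1" and j: "j < n1"
    have "(\<Sum>b<n2. ?A$$(a,b) * V$$(b,j)) = (\<Sum>b<n2. \<Sum>i<n1. U$$(a,i) * w i * (V$$(b,i) * V$$(b,j)))"
      by (intro sum.cong refl, simp add: Aab a sum_distrib_right sum_distrib_left mult_ac)
    also have "\<dots> = (\<Sum>i<n1. \<Sum>b<n2. U$$(a,i) * w i * (V$$(b,i) * V$$(b,j)))" by (rule sum.swap)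
    also have "\<dots> = (\<Sum>i<n1. U$$(a,i) * w i * (if i = j then 1 else 0))"
      by (rule sum.cong[OF refl], subst sum_distrib_left[symmetric], subst orth_mat_cols[OF oV], insert j dims, auto)
    also have "\<dots> = (\<Sum>i<n1. if i = j then U$$(a,i) * w i else 0)" by (rule sum.cong, auto)
    also have "\<dots> = U$$(a,j) * w j" using j by (simp add: sum.delta)
    finally show "(\<Sum>b<n2. ?A$$(a,b) * V$$(b,j)) = U$$(a,j) * w j" .
  qed
  have "mat_inner ?A ?B = (\<Sum>a<n1. \<Sum>b<n2. ?A$$(a,b) * ?B$$(a,b))" unfolding mat_inner_def using Uc Vc
    by (simp add: rect_diag_def)
  also have "\<dots> = (\<Sum>a<n1. \<Sum>b<n2. \<Sum>j<n1. s j * U$$(a,j) * (?A$$(a,b) * V$$(b,j)))"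
    by (intro sum.cong refl, simp add: Bab sum_distrib_left mult_ac)
  also have "\<dots> = (\<Sum>a<n1. \<Sum>j<n1. \<Sum>b<n2. s j * U$$(a,j) * (?A$$(a,b) * V$$(b,j)))"
    by (rule sum.cong[OF refl], rule sum.swap)
  also have "\<dots> = (\<Sum>a<n1. \<Sum>j<n1. s j * U$$(a,j) * (U$$(a,j) * w j))"
    by (intro sum.cong refl, subst sum_distrib_left[symmetric], simp add: AV)
  also have "\<dots> = (\<Sum>j<n1. \<Sum>a<n1. s j * U$$(a,j) * (U$$(a,j) * w j))" by (rule sum.swap)
  also have "\<dots> = (\<Sum>j<n1. w j * s j * (\<Sum>a<n1. U$$(a,j) * U$$(a,j)))"
    by (simp add: sum_distrib_left mult_ac)
  also have "\<dots> = (\<Sum>j<n1. w j * s j)" by (rule sum.cong[OF refl], simp add: orth_mat_cols[OF oU])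
  finally show ?thesis .
qed

lemma wstar:
  assumes svX: "is_svd n1 n2 X U (sing_vals X) V" and dims: "n1 \<le> n2" and ts: "0 \<le> ts" "ts \<le> 1"
  defines "r \<equiv> mrank X"
  defines "Wst \<equiv> col_block U 0 r * transpose_mat (col_block V 0 r) +
                   ts \<cdot>\<^sub>m (col_block U r n1 * rect_diag (n1 - r) (n2 - r) (\<lambda>_. 1) * transpose_mat (col_block V r n2))"
  defines "w \<equiv> (\<lambda>i. if i < r then 1 else if i < n1 then ts else (0::real))"
  shows "is_svd n1 n2 Wst U w V" and "mat_inner Wst X = nuc_norm X" and "r \<le> n1"
proof -
  define s where "s = sing_vals X"
  have X: "X \<in> carrier_mat n1 n2" and oU: "orth_mat n1 U" and oV: "orth_mat n2 V"
    and Xe: "X = U * rect_diag n1 n2 s * transpose_mat V" and snn: "\<And>i. i < n1 \<Longrightarrow> s i \<ge> 0"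
    using svX unfolding is_svd_def s_def by auto
  have Uc: "U \<in> carrier_mat n1 n1" and Vc: "V \<in> carrier_mat n2 n2" using oU oV unfolding orth_mat_def by auto
  have rr: "r = card {i. i < n1 \<and> s i > 0}" unfolding r_def s_def by (rule svd_rank[OF svX dims])
  have pre: "\<And>i. i < n1 \<Longrightarrow> (s i > 0 \<longleftrightarrow> i < r)"
    using svd_pos_prefix(1)[OF svX] unfolding s_def[symmetric] rr[symmetric] by (metis (mono_tags, lifting) lessThan_iff mem_Collect_eq)
  show rn: "r \<le> n1" using svd_pos_prefix(2)[OF svX] unfolding s_def[symmetric] rr[symmetric] .
  have s0: "\<And>i. r \<le> i \<Longrightarrow> i < n1 \<Longrightarrow> s i = 0" using pre snn by (meson not_le order_le_less)
  define U1 where "U1 = col_block U 0 r"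
  define V1 where "V1 = col_block V 0 r"
  define U2 where "U2 = col_block U r n1"
  define V2 where "V2 = col_block V r n2"
  have U1c: "U1 \<in> carrier_mat n1 r" and V1c: "V1 \<in> carrier_mat n2 r"
    and U2c: "U2 \<in> carrier_mat n1 (n1 - r)" and V2c: "V2 \<in> carrier_mat n2 (n2 - r)"
    using Uc Vc unfolding U1_def V1_def U2_def V2_def col_block_def by auto
  have WstD: "Wst = U1 * transpose_mat V1 + ts \<cdot>\<^sub>m (U2 * rect_diag (n1 - r) (n2 - r) (\<lambda>_. 1) * transpose_mat V2)"
    unfolding Wst_def U1_def V1_def U2_def V2_def ..
  have We: "Wst = U * rect_diag n1 n2 w * transpose_mat V"
  proof (rule eq_matI)
    show "dim_row Wst = dim_row (U * rect_diag n1 n2 w * transpose_mat V)"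
      unfolding WstD using U1c U2c Uc by (simp add: rect_diag_def)
    show "dim_col Wst = dim_col (U * rect_diag n1 n2 w * transpose_mat V)"
      unfolding WstD using V1c V2c Vc by (simp add: rect_diag_def)
    fix a b assume a: "a < dim_row (U * rect_diag n1 n2 w * transpose_mat V)"
      and b: "b < dim_col (U * rect_diag n1 n2 w * transpose_mat V)"
    have a': "a < n1" and b': "b < n2" using a b Uc Vc by (auto simp: rect_diag_def)
    have e1: "(U1 * transpose_mat V1) $$ (a,b) = (\<Sum>i<r. U$$(a,i) * V$$(b,i))"
      using a' b' U1c V1c Uc Vc by (simp add: U1_def V1_def col_block_def scalar_prod_def atLeast0LessThan)
    have e2: "(U2 * rect_diag (n1 - r) (n2 - r) (\<lambda>_. 1) * transpose_mat V2) $$ (a,b)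
        = (\<Sum>p<n1-r. U$$(a,r+p) * V$$(b,r+p))"
    proof -
      have "(U2 * rect_diag (n1 - r) (n2 - r) (\<lambda>_. 1) * transpose_mat V2) $$ (a,b)
        = (\<Sum>p<n1-r. U2$$(a,p) * 1 * V2$$(b,p))"
        by (rule udv_entry_gen[OF U2c V2c _ a' b'], insert dims, simp)
      also have "\<dots> = (\<Sum>p<n1-r. U$$(a,r+p) * V$$(b,r+p))"
        by (rule sum.cong, insert a' b' Uc Vc dims, auto simp: U2_def V2_def col_block_def)
      finally show ?thesis .
    qed
    have "Wst $$ (a,b) = (U1 * transpose_mat V1) $$ (a,b) + ts * (U2 * rect_diag (n1 - r) (n2 - r) (\<lambda>_. 1) * transpose_mat V2) $$ (a,b)"
      unfolding WstD using a' b' U1c V1c U2c V2c by (simp add: rect_diag_def)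
    also have "\<dots> = (\<Sum>i<r. U$$(a,i) * w i * V$$(b,i)) + (\<Sum>p<n1-r. U$$(a,r+p) * w (r+p) * V$$(b,r+p))"
    proof -
      have "(\<Sum>i<r. U$$(a,i) * w i * V$$(b,i)) = (\<Sum>i<r. U$$(a,i) * V$$(b,i))"
        by (rule sum.cong, auto simp: w_def)
      moreover have "(\<Sum>p<n1-r. U$$(a,r+p) * w (r+p) * V$$(b,r+p)) = ts * (\<Sum>p<n1-r. U$$(a,r+p) * V$$(b,r+p))"
        unfolding sum_distrib_left by (rule sum.cong, auto simp: w_def)
      ultimately show ?thesis unfolding e1 e2 by simp
    qed
    also have "\<dots> = (\<Sum>i<n1. U$$(a,i) * w i * V$$(b,i))" by (rule sum_split_at[OF rn, symmetric])
    also have "\<dots> = (U * rect_diag n1 n2 w * transpose_mat V) $$ (a,b)"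
      using udv_entry[OF Uc Vc dims a' b'] by simp
    finally show "Wst $$ (a,b) = (U * rect_diag n1 n2 w * transpose_mat V) $$ (a,b)" .
  qed
  show "is_svd n1 n2 Wst U w V" unfolding is_svd_def
  proof (intro conjI allI impI oU oV We)
    show "Wst \<in> carrier_mat n1 n2" unfolding We using udv_carrier[OF Uc Vc] .
    fix i assume "i < n1" thus "0 \<le> w i" unfolding w_def using ts by auto
  next
    fix i j assume "i \<le> j" "j < n1" thus "w j \<le> w i" unfolding w_def using ts by auto
  next
    fix i assume "n1 \<le> i" thus "w i = 0" unfolding w_def using rn by auto
  qed
  have "mat_inner Wst X = (\<Sum>i<n1. w i * s i)" unfolding We Xe by (rule inner_svd[OF oU oV dims])
  also have "\<dots> = (\<Sum>i<n1. s i)"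
    by (rule sum.cong[OF refl], insert s0, auto simp: w_def)
  also have "\<dots> = nuc_norm X" unfolding nuc_norm_def s_def using X by simp
  finally show "mat_inner Wst X = nuc_norm X" .
qed

theorem lemma4p1:
  fixes n1 n2 :: nat and \<phi> :: "real \<Rightarrow> ereal" and ts :: real
    and f :: "real mat \<Rightarrow> ereal" and \<Omega> :: "real mat set" and \<delta> :: real
  defines "feas \<equiv> {X \<in> \<Omega>. f X \<le> ereal \<delta>}"
  defines "rank_opt \<equiv> (\<lambda>X. X \<in> feas \<and> (\<forall>Y\<in>feas. mrank X \<le> mrank Y))"
  defines "Qfeas \<equiv> (\<lambda>X W. X \<in> carrier_mat n1 n2 \<and> W \<in> carrier_mat n1 n2 \<and>
              nuc_norm X - mat_inner W X = 0 \<and> spec_norm W \<le> 1 \<and> X \<in> \<Omega> \<and> f X \<le> ereal \<delta>)"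
  defines "Qobj \<equiv> (\<lambda>W. \<Sum>i<n1. \<phi> (sing_vals W i))"
  defines "Q_opt \<equiv> (\<lambda>X W. Qfeas X W \<and> (\<forall>X' W'. Qfeas X' W' \<longrightarrow> Qobj W \<le> Qobj W'))"
  assumes phi: "Phi_class \<phi> ts"
    and f: "mat_proper_lsc n1 n2 f"
    and Omega: "mat_closed n1 n2 \<Omega>"
    and dims: "n1 \<le> n2"
    and delta: "\<delta> > 0"
    and solvable: "\<exists>X. rank_opt X"
  shows "(\<forall>X U V. rank_opt X \<longrightarrow> is_svd n1 n2 X U (sing_vals X) V \<longrightarrow>
            (let r = mrank X;
                 U1 = col_block U 0 r; V1 = col_block V 0 r;
                 U2 = col_block U r n1; V2 = col_block V r n2
             in Q_opt X (U1 * transpose_mat V1 +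
                   ts \<cdot>\<^sub>m (U2 * rect_diag (n1 - r) (n2 - r) (\<lambda>_. 1) * transpose_mat V2))))
       \<and> (\<forall>X W. Q_opt X W \<longrightarrow> rank_opt X)"
proof -
  have Om: "\<Omega> \<subseteq> carrier_mat n1 n2" using Omega unfolding mat_closed_def by auto
  have phi1: "\<phi> 1 = 1" and phits: "\<phi> ts = 0" and ts0: "0 \<le> ts" and ts1: "ts < 1"
    and phinn: "\<And>t. 0 \<le> t \<Longrightarrow> t \<le> 1 \<Longrightarrow> 0 \<le> \<phi> t"
    using phi unfolding Phi_class_def by auto
  have LB: "\<And>X W. Qfeas X W \<Longrightarrow> ereal (real (mrank X)) \<le> Qobj W"
  proof -
    fix X W assume q: "Qfeas X W"
    have X: "X \<in> carrier_mat n1 n2" and W: "W \<in> carrier_mat n1 n2"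
      and eq: "nuc_norm X - mat_inner W X = 0" and sn: "spec_norm W \<le> 1"
      using q unfolding Qfeas_def by auto
    define J where "J = {k. k < n1 \<and> sing_vals W k = 1}"
    have rk: "mrank X \<le> card J" unfolding J_def by (rule lower_count(1)[OF X W dims eq sn])
    have tb: "\<forall>k<n1. 0 \<le> sing_vals W k \<and> sing_vals W k \<le> 1" by (rule lower_count(2)[OF X W dims eq sn])
    have Jsub: "J \<subseteq> {..<n1}" unfolding J_def by auto
    have "ereal (real (mrank X)) \<le> ereal (real (card J))" using rk by simp
    also have "\<dots> = (\<Sum>i\<in>J. (1::ereal))" by (rule sum_one_ereal[symmetric])
    also have "\<dots> = (\<Sum>i\<in>J. \<phi> (sing_vals W i))"
      by (rule sum.cong[OF refl], simp add: J_def phi1)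
    also have "\<dots> \<le> (\<Sum>i<n1. \<phi> (sing_vals W i))"
      by (rule sum_mono2[OF _ Jsub], insert tb phinn, auto)
    also have "\<dots> = Qobj W" unfolding Qobj_def ..
    finally show "ereal (real (mrank X)) \<le> Qobj W" .
  qed
  have FW: "\<And>X U V. X \<in> feas \<Longrightarrow> is_svd n1 n2 X U (sing_vals X) V \<Longrightarrow>
     Qfeas X (col_block U 0 (mrank X) * transpose_mat (col_block V 0 (mrank X)) +
                   ts \<cdot>\<^sub>m (col_block U (mrank X) n1 * rect_diag (n1 - mrank X) (n2 - mrank X) (\<lambda>_. 1) * transpose_mat (col_block V (mrank X) n2)))
     \<and> Qobj (col_block U 0 (mrank X) * transpose_mat (col_block V 0 (mrank X)) +
                   ts \<cdot>\<^sub>m (col_block U (mrank X) n1 * rect_diag (n1 - mrank X) (n2 - mrank X) (\<lambda>_. 1) * transpose_mat (col_block V (mrank X) n2)))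
        = ereal (real (mrank X))"
  proof -
    fix X U V assume Xf: "X \<in> feas" and svX: "is_svd n1 n2 X U (sing_vals X) V"
    define r where "r = mrank X"
    define Wst where "Wst = col_block U 0 r * transpose_mat (col_block V 0 r) +
                   ts \<cdot>\<^sub>m (col_block U r n1 * rect_diag (n1 - r) (n2 - r) (\<lambda>_. 1) * transpose_mat (col_block V r n2))"
    define w where "w = (\<lambda>i. if i < r then 1 else if i < n1 then ts else (0::real))"
    have svW: "is_svd n1 n2 Wst U w V" and inn: "mat_inner Wst X = nuc_norm X" and rn: "r \<le> n1"
      using wstar[OF svX dims ts0 less_imp_le[OF ts1]] unfolding r_def[symmetric] Wst_def[symmetric] w_def[symmetric]
      by auto
    have sW: "sing_vals Wst = w" by (rule sing_vals_eq[OF svW dims])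
    have Wc: "Wst \<in> carrier_mat n1 n2" using svW unfolding is_svd_def by auto
    have X: "X \<in> carrier_mat n1 n2" "X \<in> \<Omega>" "f X \<le> ereal \<delta>" using Xf Om unfolding feas_def by auto
    have "spec_norm Wst \<le> 1" unfolding spec_norm_def sW using Wc ts1 by (auto simp: w_def)
    hence qf: "Qfeas X Wst" unfolding Qfeas_def using X Wc inn by simp
    have "Qobj Wst = (\<Sum>i<n1. \<phi> (w i))" unfolding Qobj_def sW ..
    also have "\<dots> = (\<Sum>i<r. \<phi> (w i)) + (\<Sum>p<n1-r. \<phi> (w (r+p)))" by (rule sum_split_at[OF rn])
    also have "(\<Sum>i<r. \<phi> (w i)) = (\<Sum>i\<in>{..<r}. (1::ereal))" by (rule sum.cong, auto simp: w_def phi1)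
    also have "(\<Sum>p<n1-r. \<phi> (w (r+p))) = 0" by (rule sum.neutral, auto simp: w_def phits)
    finally have "Qobj Wst = ereal (real r)" using sum_one_ereal[of "{..<r}"] by simp
    with qf show "?thesis X U V" unfolding r_def Wst_def by simp
  qed
  have part1: "\<forall>X U V. rank_opt X \<longrightarrow> is_svd n1 n2 X U (sing_vals X) V \<longrightarrow>
            (let r = mrank X;
                 U1 = col_block U 0 r; V1 = col_block V 0 r;
                 U2 = col_block U r n1; V2 = col_block V r n2
             in Q_opt X (U1 * transpose_mat V1 +
                   ts \<cdot>\<^sub>m (U2 * rect_diag (n1 - r) (n2 - r) (\<lambda>_. 1) * transpose_mat V2)))"
  proof (intro allI impI)
    fix X U V assume ro: "rank_opt X" and svX: "is_svd n1 n2 X U (sing_vals X) V"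
    have Xf: "X \<in> feas" using ro unfolding rank_opt_def by auto
    note fw = FW[OF Xf svX]
    show "let r = mrank X;
                 U1 = col_block U 0 r; V1 = col_block V 0 r;
                 U2 = col_block U r n1; V2 = col_block V r n2
             in Q_opt X (U1 * transpose_mat V1 +
                   ts \<cdot>\<^sub>m (U2 * rect_diag (n1 - r) (n2 - r) (\<lambda>_. 1) * transpose_mat V2))"
      unfolding Let_def Q_opt_def
    proof (intro conjI allI impI)
      show "Qfeas X (col_block U 0 (mrank X) * transpose_mat (col_block V 0 (mrank X)) +
                   ts \<cdot>\<^sub>m (col_block U (mrank X) n1 * rect_diag (n1 - mrank X) (n2 - mrank X) (\<lambda>_. 1) * transpose_mat (col_block V (mrank X) n2)))"
        using fw by blast
      fix X' W' assume q': "Qfeas X' W'"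
      have "X' \<in> feas" using q' unfolding Qfeas_def feas_def by auto
      hence "mrank X \<le> mrank X'" using ro unfolding rank_opt_def by auto
      hence "ereal (real (mrank X)) \<le> ereal (real (mrank X'))" by simp
      also have "\<dots> \<le> Qobj W'" by (rule LB[OF q'])
      finally show "Qobj (col_block U 0 (mrank X) * transpose_mat (col_block V 0 (mrank X)) +
                   ts \<cdot>\<^sub>m (col_block U (mrank X) n1 * rect_diag (n1 - mrank X) (n2 - mrank X) (\<lambda>_. 1) * transpose_mat (col_block V (mrank X) n2))) \<le> Qobj W'"
        using fw by simp
    qed
  qed
  have part2: "\<forall>X W. Q_opt X W \<longrightarrow> rank_opt X"
  proof (intro allI impI)
    fix X W assume qo: "Q_opt X W"
    have q: "Qfeas X W" and mn: "\<And>X' W'. Qfeas X' W' \<Longrightarrow> Qobj W \<le> Qobj W'"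
      using qo unfolding Q_opt_def by auto
    have Xf: "X \<in> feas" using q unfolding Qfeas_def feas_def by auto
    obtain Xs where ros: "rank_opt Xs" using solvable by blast
    have Xsf: "Xs \<in> feas" using ros unfolding rank_opt_def by auto
    have Xsc: "Xs \<in> carrier_mat n1 n2" using Xsf Om unfolding feas_def by auto
    obtain U V where svs: "is_svd n1 n2 Xs U (sing_vals Xs) V" using sing_vals_svd[OF Xsc dims] by blast
    note fw = FW[OF Xsf svs]
    show "rank_opt X" unfolding rank_opt_def
    proof (intro conjI ballI Xf)
      fix Y assume Yf: "Y \<in> feas"
      have "ereal (real (mrank X)) \<le> Qobj W" by (rule LB[OF q])
      also have "\<dots> \<le> ereal (real (mrank Xs))" using mn[OF conjunct1[OF fw]] conjunct2[OF fw] by simp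
      also have "\<dots> \<le> ereal (real (mrank Y))" using ros Yf unfolding rank_opt_def by auto
      finally show "mrank X \<le> mrank Y" by simp
    qed
  qed
  show ?thesis using part1 part2 by blast
qed

end
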